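(* Let $W>0$. For $s=1,2$ let $\mathscr N^{(s)}\in L_2(0,\pi)$, $\omega^{(s)}\in\mathbb C$ with $\|\mathscr N^{(s)}\|_{L_2}+|\omega^{(s)}|\le W$, and $\Delta^{(s)}(\rho)=-\rho\sin\rho\pi+\omega^{(s)}\cos\rho\pi+\int_0^\pi\mathscr N^{(s)}(t)\cos\rho t\,dt$. Then there exist $\mathscr M^{(s)}\in L_2(0,\pi)$ such that $$\Delta^{(s)}\Big(\sqrt{\rho^2+\tfrac2\pi\omega^{(s)}}\Big)=-\rho\sin\rho\pi+\int_0^\pi\mathscr M^{(s)}(t)\cos\rho t\,dt,$$ and, with a constant $C=C(W)$, $\|\mathscr M^{(s)}\|_{L_2}\le C$ for $s=1,2$ and $$\|\mathscr M^{(1)}-\mathscr M^{(2)}\|_{L_2}\le C\big(\|\mathscr N^{(1)}-\mathscr N^{(2)}\|_{L_2}+|\omega^{(1)}-\omega^{(2)}|\big).$$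
   Context: Since $\Delta^{(s)}$ is even in $\rho$, $\Delta^{(s)}(\sqrt{\cdot})$ does not depend on the choice of square root branch. *)

theory Defs
  imports "HOL-Analysis.Analysis"
begin

definition L2_0pi :: "(real \<Rightarrow> complex) \<Rightarrow> bool" where
  "L2_0pi f \<longleftrightarrow> set_borel_measurable lborel {0..pi} f \<and>
     set_integrable lborel {0..pi} (\<lambda>t. (cmod (f t))\<^sup>2)"

definition L2_norm_0pi :: "(real \<Rightarrow> complex) \<Rightarrow> real" where
  "L2_norm_0pi f = sqrt (LINT t:{0..pi}|lborel. (cmod (f t))\<^sup>2)"

definition Delta :: "(real \<Rightarrow> complex) \<Rightarrow> complex \<Rightarrow> complex \<Rightarrow> complex" where
  "Delta N \<omega> \<rho> = - \<rho> * sin (\<rho> * pi) + \<omega> * cos (\<rho> * pi)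
      + (LINT t:{0..pi}|lborel. N t * cos (\<rho> * of_real t))"

end

theory Submission
  imports Defs
begin

lemma cos_series_c: "(\<lambda>n. (- 1) ^ n / (fact (2 * n)) * x ^ (2 * n)) sums cos x"
  for x :: complex
proof -
  have "(\<lambda>n. \<Sum>k = n * 2..<n * 2 + 2. cos_coeff k *\<^sub>R x ^ k) sums cos x"
    by (rule sums_group) (use cos_converges [of x] in auto)
  then show ?thesis
    by (simp add: cos_coeff_def ac_simps scaleR_conv_of_real)
qed

lemma sin_series_c: "(\<lambda>n. (- 1) ^ n / (fact (2 * n + 1)) * x ^ (2 * n + 1)) sums sin x"
  for x :: complex
proof -
  have "(\<lambda>n. \<Sum>k = n*2..<n * 2 + 2. sin_coeff k *\<^sub>R x ^ k) sums sin x"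
    by (rule sums_group) (use sin_converges [of x] in auto)
  then show ?thesis
    by (simp add: sin_coeff_def ac_simps scaleR_conv_of_real)
qed


lemma binom_term_le:
  fixes y :: real assumes "y \<ge> 0" "k \<le> n"
  shows "real (n choose k) * y ^ (n - k) \<le> (1 + y) ^ n"
proof -
  have "(y + 1) ^ n = (\<Sum>i\<le>n. real (n choose i) * y ^ i * 1 ^ (n - i))"
    by (rule binomial_ring)
  also have "\<dots> \<ge> real (n choose (n-k)) * y ^ (n-k) * 1 ^ (n - (n-k))"
    by (rule member_le_sum) (use assms in auto)
  finally show ?thesis using assms by (simp add: binomial_symmetric[of k n] add.commute)
qed

lemma rearr:
  fixes a :: "nat \<Rightarrow> complex" and y c :: complex
  assumes sa: "\<And>r. summable (\<lambda>n. norm (a n) * r ^ n)"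
  shows "(\<lambda>k. c ^ k * (\<Sum>m. a (m + k) * of_nat ((m + k) choose k) * y ^ m)) sums (\<Sum>n. a n * (y + c) ^ n)"
proof -
  define S2 where "S2 = Sigma (UNIV::nat set) (\<lambda>n. {..n})"
  define h where "h = (\<lambda>(n,k). a n * of_nat (n choose k) * c ^ k * y ^ (n - k))"
  have hn: "(\<Sum>k\<le>n. norm (h (n,k))) = norm (a n) * (norm c + norm y) ^ n" for n
    by (simp add: h_def binomial_ring sum_distrib_left norm_mult norm_power mult_ac)
  have "(\<lambda>x. norm (h x)) summable_on S2"
    unfolding S2_def
  proof (rule Infinite_Sum.abs_summable_on_Sigma_iff[THEN iffD2], intro conjI ballI)
    show "(\<lambda>x. norm (\<Sum>\<^sub>\<infinity>y\<in>{..x}. norm (h (x, y)))) summable_on UNIV"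
      using summable_nonneg_imp_summable_on[OF sa[of "norm c + norm y"]] by (simp add: hn)
  qed auto
  then have hs: "h summable_on S2" by (rule abs_summable_summable)
  define T where "T = infsum h S2"
  have hT: "(h has_sum T) S2" using hs T_def by simp
  have "((\<lambda>n. a n * (y + c) ^ n) has_sum T) UNIV"
  proof (rule has_sum_SigmaD[OF hT[unfolded S2_def]])
    fix n :: nat
    have "a n * (y + c) ^ n = (\<Sum>k\<le>n. h (n,k))"
      by (simp add: h_def binomial_ring[of c y] add.commute sum_distrib_left mult_ac)
    then show "((\<lambda>k. h (n, k)) has_sum a n * (y + c) ^ n) {..n}" by simp
  qed
  then have "(\<lambda>n. a n * (y + c) ^ n) sums T" by (rule has_sum_imp_sums)
  then have T1: "T = (\<Sum>n. a n * (y + c) ^ n)" by (simp add: sums_iff)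
  define g where "g = (\<lambda>(k,m). a (m + k) * of_nat ((m + k) choose k) * c ^ k * y ^ m)"
  have "(g has_sum T) (Sigma UNIV (\<lambda>_. UNIV))"
  proof -
    have "(g has_sum T) (UNIV \<times> UNIV) = (h has_sum T) S2"
      by (rule has_sum_reindex_bij_witness[where i="\<lambda>(n,k). (k, n - k)" and j="\<lambda>(k,m). (m+k, k)"])
         (auto simp: S2_def g_def h_def)
    then show ?thesis using hT by simp
  qed
  moreover have "((\<lambda>m. g (k,m)) has_sum c ^ k * (\<Sum>m. a (m + k) * of_nat ((m + k) choose k) * y ^ m)) UNIV" for k
  proof -
    have b: "norm (a (m + k) * of_nat ((m + k) choose k) * y ^ m) \<le> norm (a (m+k)) * (1 + norm y) ^ (m + k)" for m
      using binom_term_le[of "norm y" k "m+k"]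
      by (simp add: norm_mult norm_power mult.assoc mult_left_mono)
    have s1: "summable (\<lambda>m. norm (a (m+k)) * (1 + norm y) ^ (m + k))"
      using summable_ignore_initial_segment[OF sa[of "1 + norm y"], of k] by simp
    have s2: "summable (\<lambda>m. norm (a (m + k) * of_nat ((m + k) choose k) * y ^ m))"
      by (rule summable_comparison_test'[OF s1]) (use b in auto)
    have s3: "summable (\<lambda>m. norm (g (k,m)))"
      using summable_mult[OF s2, of "norm c ^ k"] by (simp add: g_def norm_mult norm_power mult_ac)
    have "(\<lambda>m. g (k,m)) sums (c ^ k * (\<Sum>m. a (m + k) * of_nat ((m + k) choose k) * y ^ m))"
      using sums_mult[OF summable_sums[OF summable_norm_cancel[OF s2]], of "c^k"]
      by (simp add: g_def mult_ac)
    then show ?thesis by (rule norm_summable_imp_has_sum[OF s3])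
  qed
  ultimately have "((\<lambda>k. c ^ k * (\<Sum>m. a (m + k) * of_nat ((m + k) choose k) * y ^ m)) has_sum T) UNIV"
    by (rule has_sum_SigmaD)
  then show ?thesis using T1 by (simp add: has_sum_imp_sums)
qed


definition cs :: "nat \<Rightarrow> real" where "cs n = (-1)^n / fact (2*n)"
definition ss :: "nat \<Rightarrow> real" where "ss n = (-1)^n / fact (2*n+1)"
definition al :: "nat \<Rightarrow> real" where "al j = - (1/2) * (-1/4)^j / (fact (j+1) * fact j)"
definition Jc :: "nat \<Rightarrow> nat \<Rightarrow> real" where
  "Jc j m = fact (2*m) * fact j * 4^j * fact (m+j) / (fact m * fact (2*m+2*j+1))"

lemma Jc0: "Jc 0 m = 1 / (2*m+1)"
  by (simp add: Jc_def)

lemma Jc_rec: "Jc j m - Jc j (Suc m) = Jc (Suc j) m"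
proof -
  have key: "\<And>A F G H P Q::real. A>0 \<Longrightarrow> F>0 \<Longrightarrow> G>0 \<Longrightarrow> H>0 \<Longrightarrow> P>0 \<Longrightarrow> Q>0 \<Longrightarrow>
    A*F*Q*G/(H*P) - ((2*real m+2)*(2*real m+1)*A)*F*Q*((real m+real j+1)*G)/(((real m+1)*H)*((2*real m+2*real j+3)*(2*real m+2*real j+2)*P))
    = A*((real j+1)*F)*(4*Q)*((real m+real j+1)*G)/(H*((2*real m+2*real j+3)*(2*real m+2*real j+2)*P))"
  proof -
    fix A F G H P Q :: real
    assume "A>0" "F>0" "G>0" "H>0" "P>0" "Q>0"
    moreover have "2*real m+2*real j+3 \<noteq> 0" "2*real m+2*real j+2 \<noteq> 0" "real m+1 \<noteq> 0" by auto
    ultimately show "A*F*Q*G/(H*P) - ((2*real m+2)*(2*real m+1)*A)*F*Q*((real m+real j+1)*G)/(((real m+1)*H)*((2*real m+2*real j+3)*(2*real m+2*real j+2)*P))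
    = A*((real j+1)*F)*(4*Q)*((real m+real j+1)*G)/(H*((2*real m+2*real j+3)*(2*real m+2*real j+2)*P))"
      by (simp add: divide_simps; simp add: algebra_simps)
  qed
  have f1: "fact (2*Suc m) = (2*real m+2)*(2*real m+1)*(fact (2*m)::real)"
  proof -
    have "2*Suc m = Suc (Suc (2*m))" by simp
    then show ?thesis by (simp only: fact_Suc) (simp add: algebra_simps)
  qed
  have f2: "fact (Suc m + j) = (real m+real j+1)*(fact (m+j)::real)" by simp
  have f3: "fact (2*Suc m + 2*j + 1) = (2*real m+2*real j+3)*(2*real m+2*real j+2)*(fact (2*m+2*j+1)::real)"
  proof -
    have "2*Suc m + 2*j + 1 = Suc (Suc (2*m+2*j+1))" by simp
    then show ?thesis by (simp only: fact_Suc) (simp add: algebra_simps)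
  qed
  have f4: "fact (2*m + 2*Suc j + 1) = (2*real m+2*real j+3)*(2*real m+2*real j+2)*(fact (2*m+2*j+1)::real)"
  proof -
    have "2*m + 2*Suc j + 1 = Suc (Suc (2*m+2*j+1))" by simp
    then show ?thesis by (simp only: fact_Suc) (simp add: algebra_simps)
  qed
  have f5: "fact (m + Suc j) = (real m+real j+1)*(fact (m+j)::real)" by simp
  have f6: "fact (Suc m) = (real m+1)*(fact m::real)" by simp
  have f7: "fact (Suc j) = (real j+1)*(fact j::real)" by simp
  have f8: "(4::real)^Suc j = 4*4^j" by simp
  have e1: "Jc j (Suc m) = ((2*real m+2)*(2*real m+1)*fact (2*m))*fact j*4^j*((real m+real j+1)*fact (m+j))/(((real m+1)*fact m)*((2*real m+2*real j+3)*(2*real m+2*real j+2)*fact (2*m+2*j+1)))"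
    unfolding Jc_def f1 f2 f3 f6 ..
  have e2: "Jc (Suc j) m = fact (2*m)*((real j+1)*fact j)*(4*4^j)*((real m+real j+1)*fact (m+j))/(fact m*((2*real m+2*real j+3)*(2*real m+2*real j+2)*fact (2*m+2*j+1)))"
    unfolding Jc_def f4 f5 f7 f8 ..
  show ?thesis unfolding e1 e2 unfolding Jc_def
    by (rule key) auto
qed

lemma coefE: "cs (m+j+1) * real ((m+j+1) choose (j+1)) = cs m * al j * Jc j m"
proof -
  have key: "\<And>A F G H P Q s r::real. A>0 \<Longrightarrow> F>0 \<Longrightarrow> G>0 \<Longrightarrow> H>0 \<Longrightarrow> P>0 \<Longrightarrow> Q>0 \<Longrightarrow>
     (s*r*(-1)) / ((2*real m+2*real j+2)*P) * (((real m+real j+1)*G) / (((real j+1)*F) * H))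
     = s / A * (- (1/2) * (r/Q) / (((real j+1)*F) * F)) * (A*F*Q*G/(H*P))"
  proof -
    fix A F G H P Q s r :: real
    assume "A>0" "F>0" "G>0" "H>0" "P>0" "Q>0"
    moreover have "2*real m+2*real j+2 \<noteq> 0" "real j+1 \<noteq> 0" by auto
    ultimately show "(s*r*(-1)) / ((2*real m+2*real j+2)*P) * (((real m+real j+1)*G) / (((real j+1)*F) * H))
     = s / A * (- (1/2) * (r/Q) / (((real j+1)*F) * F)) * (A*F*Q*G/(H*P))"
      by (simp add: divide_simps; simp add: algebra_simps)
  qed
  have b: "real ((m+j+1) choose (j+1)) = fact (m+j+1) / (fact (j+1) * fact m)"
    by (subst binomial_fact) auto
  have f1: "fact (2*(m+j+1)) = (2*real m+2*real j+2)*(fact (2*m+2*j+1)::real)"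
  proof -
    have "2*(m+j+1) = Suc (2*m+2*j+1)" by simp
    then show ?thesis by (simp only: fact_Suc) (simp add: algebra_simps)
  qed
  have f2: "fact (m+j+1) = (real m+real j+1)*(fact (m+j)::real)" by simp
  have f3: "fact (j+1) = (real j+1)*(fact j::real)" by simp
  have p: "(-1/4::real)^j = (-1)^j / 4^j"
    by (metis minus_divide_left power_divide)
  have sg: "(-1::real)^(m+j+1) = (-1)^m * (-1)^j * (-1)" by (simp add: power_add)
  have e1: "cs (m+j+1) * real ((m+j+1) choose (j+1)) = ((-1)^m*(-1)^j*(-1)) / ((2*real m+2*real j+2)*fact (2*m+2*j+1)) * (((real m+real j+1)*fact (m+j)) / (((real j+1)*fact j) * fact m))"
    unfolding cs_def b f1 f2 f3 sg ..
  have e2: "cs m * al j * Jc j m = (-1)^m / fact (2*m) * (- (1/2) * ((-1)^j/4^j) / (((real j+1)*fact j) * fact j)) * (fact (2*m) * fact j * 4^j * fact (m+j) / (fact m * fact (2*m+2*j+1)))"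
    unfolding cs_def al_def Jc_def f3 p ..
  show ?thesis unfolding e1 e2 by (rule key) auto
qed

lemma Jc_Suc: "Jc (Suc j) m = Jc j m * (2*real j+2) / (2*real m+2*real j+3)"
proof -
  have key: "\<And>A F G H P Q::real. A>0 \<Longrightarrow> F>0 \<Longrightarrow> G>0 \<Longrightarrow> H>0 \<Longrightarrow> P>0 \<Longrightarrow> Q>0 \<Longrightarrow>
    A*((real j+1)*F)*(4*Q)*((real m+real j+1)*G)/(H*((2*real m+2*real j+3)*(2*real m+2*real j+2)*P))
    = A*F*Q*G/(H*P) * (2*real j+2) / (2*real m+2*real j+3)"
  proof -
    fix A F G H P Q :: real
    assume "A>0" "F>0" "G>0" "H>0" "P>0" "Q>0"
    moreover have "2*real m+2*real j+3 \<noteq> 0" "2*real m+2*real j+2 \<noteq> 0" by auto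
    ultimately show "A*((real j+1)*F)*(4*Q)*((real m+real j+1)*G)/(H*((2*real m+2*real j+3)*(2*real m+2*real j+2)*P))
    = A*F*Q*G/(H*P) * (2*real j+2) / (2*real m+2*real j+3)"
      by (simp add: divide_simps; simp add: algebra_simps)
  qed
  have f4: "fact (2*m + 2*Suc j + 1) = (2*real m+2*real j+3)*(2*real m+2*real j+2)*(fact (2*m+2*j+1)::real)"
  proof -
    have "2*m + 2*Suc j + 1 = Suc (Suc (2*m+2*j+1))" by simp
    then show ?thesis by (simp only: fact_Suc) (simp add: algebra_simps)
  qed
  have f5: "fact (m + Suc j) = (real m+real j+1)*(fact (m+j)::real)" by simp
  have f7: "fact (Suc j) = (real j+1)*(fact j::real)" by simp
  have f8: "(4::real)^Suc j = 4*4^j" by simp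
  have e2: "Jc (Suc j) m = fact (2*m)*((real j+1)*fact j)*(4*4^j)*((real m+real j+1)*fact (m+j))/(fact m*((2*real m+2*real j+3)*(2*real m+2*real j+2)*fact (2*m+2*j+1)))"
    unfolding Jc_def f4 f5 f7 f8 ..
  show ?thesis unfolding e2 unfolding Jc_def
    by (rule key) auto
qed

definition bp :: "nat \<Rightarrow> real" where "bp n = (if n = 0 then 0 else ss (n - 1))"

lemma coefE'0: "bp (m+1) * real (m+1) - cs m / 2 = cs m * (- al 0) * Jc 0 m"
proof -
  have f1: "fact (2*m+1) = (2*real m+1) * (fact (2*m)::real)" by simp
  have n: "2*real m+1 \<noteq> 0" by (simp add: add_nonneg_eq_0_iff)
  show ?thesis unfolding bp_def ss_def cs_def al_def Jc0 f1 using n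
    by (simp add: divide_simps; simp add: algebra_simps)
qed

lemma coefE'S: "bp (m+i+2) * real ((m+i+2) choose (i+2)) = cs m * (- al (i+1)) * (Jc (i+1) m + 2*real (i+1) * Jc i m)"
proof -
  have key: "\<And>A F G H P Q s r::real. A>0 \<Longrightarrow> F>0 \<Longrightarrow> G>0 \<Longrightarrow> H>0 \<Longrightarrow> P>0 \<Longrightarrow> Q>0 \<Longrightarrow>
     (s*r*(-1)) / ((2*real m+2*real i+3)*(2*real m+2*real i+2)*P) * (((real m+real i+2)*(real m+real i+1)*G) / (((real i+2)*(real i+1)*F) * H))
     = s / A * ((1/2) * (-r/(4*Q)) / (((real i+2)*(real i+1)*F) * ((real i+1)*F))) *
        (A*F*Q*G/(H*P) * (2*real i+2) / (2*real m+2*real i+3) + 2*(real i+1) * (A*F*Q*G/(H*P)))"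
  proof -
    fix A F G H P Q s r :: real
    assume "A>0" "F>0" "G>0" "H>0" "P>0" "Q>0"
    moreover have "2*real m+2*real i+2 \<noteq> 0" "2*real m+2*real i+3 \<noteq> 0" "real i+1 \<noteq> 0" "real i+2 \<noteq> 0"
      "real m+real i+1 \<noteq> 0" by auto
    ultimately show "(s*r*(-1)) / ((2*real m+2*real i+3)*(2*real m+2*real i+2)*P) * (((real m+real i+2)*(real m+real i+1)*G) / (((real i+2)*(real i+1)*F) * H))
     = s / A * ((1/2) * (-r/(4*Q)) / (((real i+2)*(real i+1)*F) * ((real i+1)*F))) *
        (A*F*Q*G/(H*P) * (2*real i+2) / (2*real m+2*real i+3) + 2*(real i+1) * (A*F*Q*G/(H*P)))"
      by (simp add: divide_simps; simp add: algebra_simps)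
  qed
  have b: "real ((m+i+2) choose (i+2)) = fact (m+i+2) / (fact (i+2) * fact m)"
    by (subst binomial_fact) auto
  have f1: "fact (2*(m+i+2-1)+1) = (2*real m+2*real i+3)*(2*real m+2*real i+2)*(fact (2*m+2*i+1)::real)"
  proof -
    have "2*(m+i+2-1)+1 = Suc (Suc (2*m+2*i+1))" by simp
    then show ?thesis by (simp only: fact_Suc) (simp add: algebra_simps)
  qed
  have f2: "fact (m+i+2) = (real m+real i+2)*(real m+real i+1)*(fact (m+i)::real)"
  proof -
    have "m+i+2 = Suc (Suc (m+i))" by simp
    then show ?thesis by (simp only: fact_Suc) (simp add: algebra_simps)
  qed
  have f3: "fact (i+2) = (real i+2)*(real i+1)*(fact i::real)"
  proof -
    have "i+2 = Suc (Suc i)" by simp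
    then show ?thesis by (simp only: fact_Suc) (simp add: algebra_simps)
  qed
  have f4: "fact (i+1) = (real i+1)*(fact i::real)" by simp
  have p: "(-1/4::real)^(i+1) = - ((-1)^i) / (4*4^i)"
  proof -
    have "(-1/4::real)^(i+1) = (-1)^(i+1) / 4^(i+1)" by (metis minus_divide_left power_divide)
    then show ?thesis by simp
  qed
  have sg: "(-1::real)^(m+i+2-1) = (-1)^m * (-1)^i * (-1)" by (simp add: power_add)
  have nz: "m + i + 2 \<noteq> 0" by simp
  have e1: "bp (m+i+2) * real ((m+i+2) choose (i+2)) = ((-1)^m*(-1)^i*(-1)) / ((2*real m+2*real i+3)*(2*real m+2*real i+2)*fact (2*m+2*i+1)) * (((real m+real i+2)*(real m+real i+1)*fact (m+i)) / (((real i+2)*(real i+1)*fact i) * fact m))"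
    unfolding bp_def ss_def b if_not_P[OF nz] f1 f2 f3 sg ..
  have e2: "cs m * (- al (i+1)) * (Jc (i+1) m + 2*real (i+1) * Jc i m) = (-1)^m / fact (2*m) * ((1/2) * (- ((-1)^i)/(4*4^i)) / (((real i+2)*(real i+1)*fact i) * ((real i+1)*fact i))) *
        (Jc i m * (2*real i+2) / (2*real m+2*real i+3) + 2*(real i+1) * Jc i m)"
  proof -
    have j: "Jc (i+1) m = Jc i m * (2*real i+2) / (2*real m+2*real i+3)" using Jc_Suc[of i m] by simp
    have a: "al (i+1) = - (1/2) * (-1/4)^(i+1) / (fact (i+2) * fact (i+1))" unfolding al_def by simp
    show ?thesis unfolding j a cs_def f3 f4 p by simp
  qed
  show ?thesis unfolding e1 e2 unfolding Jc_def
    by (rule key) auto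
qed


lemma pw2: "(z * of_real t)^(2*k) = of_real (t^(2*k)) * (z^2)^k" for z :: complex and t :: real
proof -
  have "(z * of_real t)^(2*k) = ((z * of_real t)^2)^k" by (rule power_mult)
  also have "\<dots> = (z^2)^k * ((of_real t)^2)^k" by (simp add: power_mult_distrib)
  also have "\<dots> = of_real (t^(2*k)) * (z^2)^k" by (simp only: of_real_power power_mult) (rule mult.commute)
  finally show ?thesis .
qed

lemma cos_ser: "(\<lambda>n. of_real (cs n * t^(2*n)) * (z^2)^n) sums cos (z * of_real t)"
  for z :: complex and t :: real
proof -
  have "(\<lambda>n. (- 1) ^ n / (fact (2 * n)) * (z * of_real t) ^ (2 * n)) sums cos (z * of_real t)"
    by (rule cos_series_c)
  moreover have "(- 1) ^ n / (fact (2 * n)) * (z * of_real t) ^ (2 * n) = of_real (cs n * t^(2*n)) * (z^2)^n" for n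
    by (simp add: cs_def power_mult_distrib power_mult[symmetric] mult.commute)
  ultimately show ?thesis by simp
qed

lemma sin_ser: "(\<lambda>n. of_real (bp n * T^(2*n)) * (z^2)^n) sums (of_real T * z * sin (z * of_real T))"
  for z :: complex and T :: real
proof -
  have "(\<lambda>n. (- 1) ^ n / (fact (2 * n + 1)) * (z * of_real T) ^ (2 * n + 1)) sums sin (z * of_real T)"
    by (rule sin_series_c)
  from sums_mult[OF this, of "z * of_real T"]
  have 1: "(\<lambda>n. (z * of_real T) * ((- 1) ^ n / (fact (2 * n + 1)) * (z * of_real T) ^ (2 * n + 1))) sums (of_real T * z * sin (z * of_real T))"
    by (simp add: mult_ac)
  have 2: "(z * of_real T) * ((- 1) ^ n / (fact (2 * n + 1)) * (z * of_real T) ^ (2 * n + 1)) = of_real (bp (Suc n) * T^(2*Suc n)) * (z^2)^(Suc n)" for n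
  proof -
    have "(z * of_real T) * (z * of_real T) ^ (2 * n + 1) = (z * of_real T) ^ (2 * Suc n)"
      by (simp add: power_Suc[symmetric] del: power_Suc)
    also have "\<dots> = of_real (T^(2*Suc n)) * (z^2)^(Suc n)"
      by (rule pw2)
    finally show ?thesis by (simp add: bp_def ss_def)
  qed
  from 1 have "(\<lambda>n. of_real (bp (Suc n) * T^(2*Suc n)) * (z^2)^(Suc n)) sums (of_real T * z * sin (z * of_real T))"
    unfolding 2 .
  then have "(\<lambda>n. of_real (bp n * T^(2*n)) * (z^2)^n) sums (of_real T * z * sin (z * of_real T) + of_real (bp 0 * T^(2*0)) * (z^2)^0)"
    by (rule sums_Suc_iff[where f="\<lambda>n. of_real (bp n * T^(2*n)) * (z^2)^n", THEN iffD1])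
  then show ?thesis by (simp add: bp_def)
qed

lemma summable_fact_bound:
  fixes f :: "nat \<Rightarrow> real"
  assumes "\<And>n. norm (f n) \<le> x^n / fact n" 
  shows "summable f"
proof (rule summable_comparison_test[OF _ summable_exp[of x]])
  show "\<exists>N. \<forall>n\<ge>N. norm (f n) \<le> inverse (fact n) * x ^ n"
    using assms by (auto simp: field_simps)
qed

lemma cs_abs: "\<bar>cs n\<bar> \<le> 1 / fact n"
proof -
  have "fact n \<le> (fact (2*n) :: real)" by (rule fact_mono) auto
  then show ?thesis by (simp add: cs_def abs_mult frac_le)
qed

lemma bp_abs: "\<bar>bp n\<bar> \<le> 1 / fact n"
proof (cases n)
  case 0 then show ?thesis by (simp add: bp_def)
next
  case (Suc k)
  have "fact n \<le> (fact (2*k+1) :: real)" by (rule fact_mono) (auto simp: Suc)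
  then have "1 / fact (2*k+1) \<le> 1 / (fact n :: real)" by (simp add: frac_le)
  then show ?thesis by (simp add: bp_def ss_def Suc abs_mult)
qed

lemma cs_bound: "\<bar>cs n\<bar> * r^(2*n) \<le> (r^2)^n / fact n" if "r \<ge> 0" for r :: real
  using mult_right_mono[OF cs_abs[of n], of "r^(2*n)"] that by (simp add: power_mult)

lemma bp_bound: "\<bar>bp n\<bar> * r^(2*n) \<le> (r^2)^n / fact n" if "r \<ge> 0" for r :: real
  using mult_right_mono[OF bp_abs[of n], of "r^(2*n)"] that by (simp add: power_mult)

lemma cs_summable: "summable (\<lambda>n. \<bar>cs n\<bar> * r^(2*n))" if "r \<ge> 0" for r :: real
  by (rule summable_fact_bound[of _ "r^2"]) (use cs_bound[OF that] in \<open>auto simp: abs_mult\<close>)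

lemma int_bound:
  fixes f :: "real \<Rightarrow> complex"
  assumes T: "0 \<le> T" and f: "set_integrable lborel {0..T} f" and b: "\<And>s. s \<in> {0..T} \<Longrightarrow> norm (f s) \<le> C"
  shows "(\<integral>x. norm (indicator {0..T} x *\<^sub>R f x) \<partial>lborel) \<le> C * T"
proof -
  have i1: "integrable lborel (\<lambda>x. norm (indicator {0..T} x *\<^sub>R f x))"
    using f unfolding set_integrable_def by (rule integrable_norm)
  have i2: "integrable lborel (\<lambda>x. indicator {0..T} x *\<^sub>R C)"
    using borel_integrable_atLeastAtMost'[of 0 T "\<lambda>_. C"] unfolding set_integrable_def by simp
  have "(\<integral>x. norm (indicator {0..T} x *\<^sub>R f x) \<partial>lborel) \<le> (\<integral>x. indicator {0..T} x *\<^sub>R C \<partial>lborel)"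
    by (rule integral_mono[OF i1 i2]) (use b in \<open>auto split: split_indicator\<close>)
  also have "\<dots> = C * T" using T by (simp add: mult.commute)
  finally show ?thesis .
qed


lemma KL:
  fixes q :: "nat \<Rightarrow> real \<Rightarrow> complex" and B :: "nat \<Rightarrow> real" and T :: real and \<rho> :: complex
  assumes T: "0 \<le> T" and cont: "\<And>j. continuous_on {0..T} (q j)"
    and bnd: "\<And>j s. s \<in> {0..T} \<Longrightarrow> norm (q j s) \<le> B j" and sB: "summable B"
  shows "(\<lambda>j. \<Sum>m. of_real (cs m) * (\<rho>^2)^m * (LINT s:{0..T}|lborel. q j s * of_real (s^(2*m))))
           sums (LINT s:{0..T}|lborel. (\<Sum>j. q j s) * cos (\<rho> * of_real s))"
proof -
  define R where "R = norm \<rho> * T"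
  have R0: "R \<ge> 0" using T by (simp add: R_def)
  have B0: "B j \<ge> 0" for j using bnd[of 0 j] T by (meson atLeastAtMost_iff norm_ge_zero order_trans order_refl)
  have inner: "(\<lambda>m. of_real (cs m) * (\<rho>^2)^m * (LINT s:{0..T}|lborel. q j s * of_real (s^(2*m))))
      sums (LINT s:{0..T}|lborel. q j s * cos (\<rho> * of_real s))" for j
  proof -
    define f where "f m s = indicator {0..T} s *\<^sub>R (q j s * (of_real (cs m * s^(2*m)) * (\<rho>^2)^m))" for m s
    have cf: "continuous_on {0..T} (\<lambda>s. q j s * (of_real (cs m * s^(2*m)) * (\<rho>^2)^m))" for m
      by (intro continuous_intros cont)
    have si: "set_integrable lborel {0..T} (\<lambda>s. q j s * (of_real (cs m * s^(2*m)) * (\<rho>^2)^m))" for m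
      by (rule borel_integrable_atLeastAtMost'[OF cf])
    have int: "integrable lborel (f m)" for m
      using si[of m] unfolding set_integrable_def f_def .
    have pt0: "norm (q j s * (of_real (cs m * s^(2*m)) * (\<rho>^2)^m)) \<le> B j * (\<bar>cs m\<bar> * R^(2*m))" if s: "s \<in> {0..T}" for m s
    proof -
      have "norm (of_real (cs m * s^(2*m)) * (\<rho>^2)^m) = \<bar>cs m\<bar> * (norm \<rho> * s)^(2*m)"
        using s by (simp add: norm_mult norm_power abs_mult power_mult_distrib power_mult[symmetric] mult_ac)
      also have "\<dots> \<le> \<bar>cs m\<bar> * R^(2*m)"
        using s T unfolding R_def by (intro mult_left_mono power_mono mult_left_mono) auto
      finally have nX: "norm (of_real (cs m * s^(2*m)) * (\<rho>^2)^m) \<le> \<bar>cs m\<bar> * R^(2*m)" .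
      show ?thesis using mult_mono[OF bnd[OF s, of j] nX B0[of j] norm_ge_zero] by (simp add: norm_mult)
    qed
    have pt: "norm (f m s) \<le> B j * (\<bar>cs m\<bar> * R^(2*m))" for m s
      using pt0[of s m] B0[of j] by (auto simp: f_def split: split_indicator)
    have sumR: "summable (\<lambda>m. B j * (\<bar>cs m\<bar> * R^(2*m)))"
      by (rule summable_mult[OF cs_summable[OF R0]])
    have ae: "AE s in lborel. summable (\<lambda>m. norm (f m s))"
      by (intro AE_I2 summable_comparison_test'[OF sumR]) (use pt in auto)
    have sn: "summable (\<lambda>m. \<integral>s. norm (f m s) \<partial>lborel)"
    proof (rule summable_comparison_test'[OF summable_mult2[OF sumR, of T]])
      fix m :: nat
      have "(\<integral>s. norm (f m s) \<partial>lborel) \<le> B j * (\<bar>cs m\<bar> * R^(2*m)) * T"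
        unfolding f_def by (rule int_bound[OF T si]) (use pt0 in auto)
      then show "norm (\<integral>s. norm (f m s) \<partial>lborel) \<le> B j * (\<bar>cs m\<bar> * R^(2*m)) * T"
        by simp
    qed
    have S: "(\<lambda>m. integral\<^sup>L lborel (f m)) sums (\<integral>s. (\<Sum>m. f m s) \<partial>lborel)"
      by (rule sums_integral[OF int ae sn])
    have e1: "integral\<^sup>L lborel (f m) = of_real (cs m) * (\<rho>^2)^m * (LINT s:{0..T}|lborel. q j s * of_real (s^(2*m)))" for m
    proof -
      have "integral\<^sup>L lborel (f m) = (\<integral>s. (indicator {0..T} s *\<^sub>R (q j s * of_real (s^(2*m)))) * (of_real (cs m) * (\<rho>^2)^m) \<partial>lborel)"
        unfolding f_def by (intro Bochner_Integration.integral_cong) (auto simp: mult_ac)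
      also have "\<dots> = (LINT s:{0..T}|lborel. q j s * of_real (s^(2*m))) * (of_real (cs m) * (\<rho>^2)^m)"
        unfolding set_lebesgue_integral_def by (rule integral_mult_left_zero)
      finally show ?thesis by (simp add: mult_ac)
    qed
    have e2: "(\<Sum>m. f m s) = indicator {0..T} s *\<^sub>R (q j s * cos (\<rho> * of_real s))" for s
    proof -
      have "(\<lambda>m. q j s * (of_real (cs m * s^(2*m)) * (\<rho>^2)^m)) sums (q j s * cos (\<rho> * of_real s))"
        by (rule sums_mult[OF cos_ser])
      from sums_scaleR_right[OF this, of "indicator {0..T} s"]
      show ?thesis unfolding f_def by (simp add: sums_iff)
    qed
    show ?thesis using S unfolding e1 e2 set_lebesgue_integral_def .
  qed
  define g where "g j s = indicator {0..T} s *\<^sub>R (q j s * cos (\<rho> * of_real s))" for j s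
  have cg: "continuous_on {0..T} (\<lambda>s. q j s * cos (\<rho> * of_real s))" for j
    by (intro continuous_intros cont)
  have si: "set_integrable lborel {0..T} (\<lambda>s. q j s * cos (\<rho> * of_real s))" for j
    by (rule borel_integrable_atLeastAtMost'[OF cg])
  have int: "integrable lborel (g j)" for j
    using si[of j] unfolding set_integrable_def g_def .
  have pt0: "norm (q j s * cos (\<rho> * of_real s)) \<le> B j * exp R" if s: "s \<in> {0..T}" for j s
  proof -
    have "norm (cos (\<rho> * of_real s)) \<le> exp (norm (\<rho> * of_real s))" by (rule norm_cos_le)
    also have "\<dots> \<le> exp R" using s T unfolding R_def by (auto simp: norm_mult intro!: mult_left_mono)
    finally show ?thesis unfolding norm_mult by (intro mult_mono bnd s) (auto simp: B0)
  qed
  have pt: "norm (g j s) \<le> B j * exp R" for j s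
    using pt0[of s j] B0[of j] by (auto simp: g_def split: split_indicator)
  have sumR: "summable (\<lambda>j. B j * exp R)" by (rule summable_mult2[OF sB])
  have ae: "AE s in lborel. summable (\<lambda>j. norm (g j s))"
    by (intro AE_I2 summable_comparison_test'[OF sumR]) (use pt in auto)
  have sn: "summable (\<lambda>j. \<integral>s. norm (g j s) \<partial>lborel)"
  proof (rule summable_comparison_test'[OF summable_mult2[OF sumR, of T]])
    fix j :: nat
    have "(\<integral>s. norm (g j s) \<partial>lborel) \<le> B j * exp R * T"
      unfolding g_def by (rule int_bound[OF T si]) (use pt0 in auto)
    then show "norm (\<integral>s. norm (g j s) \<partial>lborel) \<le> B j * exp R * T" by simp
  qed
  have S: "(\<lambda>j. integral\<^sup>L lborel (g j)) sums (\<integral>s. (\<Sum>j. g j s) \<partial>lborel)"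
    by (rule sums_integral[OF int ae sn])
  have e1: "integral\<^sup>L lborel (g j) = (\<Sum>m. of_real (cs m) * (\<rho>^2)^m * (LINT s:{0..T}|lborel. q j s * of_real (s^(2*m))))" for j
    using inner[of j] unfolding g_def set_lebesgue_integral_def by (simp add: sums_iff)
  have e2: "(\<Sum>j. g j s) = indicator {0..T} s *\<^sub>R ((\<Sum>j. q j s) * cos (\<rho> * of_real s))" for s
  proof (cases "s \<in> {0..T}")
    case True
    have "summable (\<lambda>j. norm (q j s))"
      by (rule summable_comparison_test'[OF sB]) (use bnd[OF True] in auto)
    then have "summable (\<lambda>j. q j s)" by (rule summable_norm_cancel)
    then show ?thesis using True by (simp add: g_def suminf_mult2)
  next
    case False then show ?thesis by (simp add: g_def)
  qed
  show ?thesis using S unfolding e1 e2 set_lebesgue_integral_def .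
qed


lemma moment:
  fixes T :: real assumes T: "0 \<le> T"
  shows "(LINT s:{0..T}|lborel. (T^2 - s^2)^j * s^(2*m)) = T^(2*j+2*m+1) * Jc j m"
proof (induction j arbitrary: m)
  case 0
  have "(LINT s:{0..T}|lborel. (T^2 - s^2)^0 * s^(2*m)) = (\<integral>s. s^(2*m) * indicator {0..T} s \<partial>lborel)"
    unfolding set_lebesgue_integral_def by (intro Bochner_Integration.integral_cong) auto
  also have "\<dots> = T^(2*m+1) / (2*m+1)" using integral_power[OF T, of "2*m"] by simp
  finally show ?case by (simp add: Jc0)
next
  case (Suc j)
  have c1: "set_integrable lborel {0..T} (\<lambda>s. (T^2 - s^2)^j * s^(2*m))" for m
    by (rule borel_integrable_atLeastAtMost') (intro continuous_intros)
  have "(LINT s:{0..T}|lborel. (T^2 - s^2)^Suc j * s^(2*m))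
      = (LINT s:{0..T}|lborel. T^2 * ((T^2 - s^2)^j * s^(2*m)) - (T^2 - s^2)^j * s^(2*Suc m))"
  proof (intro set_lebesgue_integral_cong allI impI)
    fix s :: real
    have "s^(2*Suc m) = s^(2*m) * s^2" by (simp add: power_add[symmetric])
    then show "(T^2 - s^2)^Suc j * s^(2*m) = T^2 * ((T^2 - s^2)^j * s^(2*m)) - (T^2 - s^2)^j * s^(2*Suc m)"
      by (simp only: power_Suc) (simp add: algebra_simps)
  qed auto
  also have "\<dots> = (LINT s:{0..T}|lborel. T^2 * ((T^2 - s^2)^j * s^(2*m))) - (LINT s:{0..T}|lborel. (T^2 - s^2)^j * s^(2*Suc m))"
    by (rule set_integral_diff(2)[OF set_integrable_mult_right[OF c1[of m]] c1[of "Suc m"]])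
  also have "\<dots> = T^2 * (LINT s:{0..T}|lborel. (T^2 - s^2)^j * s^(2*m)) - (LINT s:{0..T}|lborel. (T^2 - s^2)^j * s^(2*Suc m))"
    by (simp only: set_integral_mult_right)
  also have "\<dots> = T^(2*Suc j+2*m+1) * (Jc j m - Jc j (Suc m))"
    unfolding Suc.IH by (simp add: algebra_simps power_add power2_eq_square)
  finally show ?case by (simp add: Jc_rec)
qed

lemma four_pow: "real (2*j+1) \<le> 2 * 4^j"
proof (induction j)
  case (Suc j) then show ?case by simp
qed simp

lemma al_abs: "\<bar>al j\<bar> * (real j + 1) * (2 * real j + 1) \<le> 1 / fact j"
proof -
  have a0: "\<bar>al j\<bar> = (1/2) / 4^j / (((real j + 1) * fact j) * fact j)"
  proof -
    have "\<bar>(-1/4::real)^j\<bar> = 1 / 4^j" by (simp add: power_abs power_divide)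
    moreover have "fact (j+1) = (real j + 1) * (fact j :: real)" by simp
    ultimately show ?thesis unfolding al_def by (simp add: abs_mult abs_divide)
  qed
  have a: "\<bar>al j\<bar> * (real j + 1) = (1/2) / 4^j / (fact j * fact j)"
    unfolding a0 by (simp add: divide_simps)
  have "(1/2) / 4^j / (fact j * fact j) * (2 * real j + 1) = ((2 * real j + 1) / (2 * 4^j)) * (1 / fact j) * (1 / fact j)"
    by (simp add: divide_simps)
  also have "\<dots> \<le> 1 * 1 * (1 / fact j)"
  proof (intro mult_right_mono mult_mono)
    show "(2 * real j + 1) / (2 * 4 ^ j) \<le> 1" using four_pow[of j] by simp
    show "1 / fact j \<le> (1::real)" by simp
  qed auto
  finally show ?thesis using a by simp
qed

lemma al_abs1: "\<bar>al j\<bar> \<le> 1 / fact j"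
proof -
  have o: "1 \<le> (real j + 1) * (2 * real j + 1)"
    using mult_mono[of 1 "real j + 1" 1 "2 * real j + 1"] by simp
  have "\<bar>al j\<bar> * 1 \<le> \<bar>al j\<bar> * ((real j + 1) * (2 * real j + 1))"
    by (rule mult_left_mono[OF o]) simp
  then have "\<bar>al j\<bar> \<le> \<bar>al j\<bar> * (real j + 1) * (2 * real j + 1)" by (simp add: mult.assoc)
  then show ?thesis using al_abs[of j] by linarith
qed


lemma rearr_summable:
  fixes a :: "nat \<Rightarrow> complex" and y :: complex
  assumes sa: "\<And>r. summable (\<lambda>n. norm (a n) * r ^ n)"
  shows "summable (\<lambda>m. a (m + k) * of_nat ((m + k) choose k) * y ^ m)"
proof -
  have b: "norm (a (m + k) * of_nat ((m + k) choose k) * y ^ m) \<le> norm (a (m+k)) * (1 + norm y) ^ (m + k)" for m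
    using binom_term_le[of "norm y" k "m+k"]
    by (simp add: norm_mult norm_power mult.assoc mult_left_mono)
  have s1: "summable (\<lambda>m. norm (a (m+k)) * (1 + norm y) ^ (m + k))"
    using summable_ignore_initial_segment[OF sa[of "1 + norm y"], of k] by simp
  have "summable (\<lambda>m. norm (a (m + k) * of_nat ((m + k) choose k) * y ^ m))"
    by (rule summable_comparison_test'[OF s1]) (use b in auto)
  then show ?thesis by (rule summable_norm_cancel)
qed

lemma lint_ofreal_const:
  "(LINT s:A|lborel. of_real (f s) * C) = of_real (LINT s:A|lborel. f s) * (C::complex)"
  by (simp add: set_integral_complex_of_real)

definition Kf :: "complex \<Rightarrow> real \<Rightarrow> real \<Rightarrow> complex" where
  "Kf c t s = (\<Sum>j. of_real (al j * t * (t^2 - s^2)^j) * c^(j+1))"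

lemma sq_diff_le: "0 \<le> s \<Longrightarrow> s \<le> t \<Longrightarrow> \<bar>t^2 - s^2\<bar> \<le> (t::real)^2"
  by (simp add: abs_le_iff power_mono)

lemma E:
  fixes \<rho> c \<mu> :: complex and t :: real
  assumes t: "0 \<le> t" and \<mu>: "\<mu>^2 = \<rho>^2 + c"
  shows "(LINT s:{0..t}|lborel. Kf c t s * cos (\<rho> * of_real s)) = cos (\<mu> * of_real t) - cos (\<rho> * of_real t)"
proof -
  define a where "a n = (of_real (cs n * t^(2*n)) :: complex)" for n
  define S where "S k = (\<Sum>m. a (m + k) * of_nat ((m + k) choose k) * (\<rho>^2) ^ m)" for k
  have sa: "summable (\<lambda>n. norm (a n) * r^n)" for r
  proof (rule summable_fact_bound[of _ "t^2 * \<bar>r\<bar>"])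
    fix n
    have "norm (norm (a n) * r^n) = \<bar>cs n\<bar> * t^(2*n) * \<bar>r\<bar>^n"
      using t by (simp add: a_def norm_mult abs_mult power_abs norm_power)
    also have "\<dots> \<le> 1 / fact n * t^(2*n) * \<bar>r\<bar>^n"
      using t by (intro mult_right_mono cs_abs) auto
    also have "\<dots> = (t^2 * \<bar>r\<bar>)^n / fact n" by (simp add: power_mult power_mult_distrib)
    finally show "norm (norm (a n) * r^n) \<le> (t^2 * \<bar>r\<bar>)^n / fact n" .
  qed
  have L: "(\<lambda>n. a n * (\<rho>^2 + c)^n) sums cos (\<mu> * of_real t)"
    using cos_ser[of t \<mu>] \<mu> by (simp add: a_def)
  have R: "(\<lambda>k. c^k * S k) sums cos (\<mu> * of_real t)"
    using rearr[OF sa, of c "\<rho>^2"] L unfolding S_def by (simp add: sums_iff)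
  have S0: "S 0 = cos (\<rho> * of_real t)"
    using cos_ser[of t \<rho>] unfolding S_def a_def by (simp add: sums_iff)
  have R1: "(\<lambda>j. c^(Suc j) * S (Suc j)) sums (cos (\<mu> * of_real t) - cos (\<rho> * of_real t))"
    using sums_Suc_iff[where f="\<lambda>k. c^k * S k", THEN iffD2, of "cos (\<mu> * of_real t) - cos (\<rho> * of_real t)"] R S0
    by simp
  define q where "q j s = of_real (al j * t * (t^2 - s^2)^j) * c^(j+1)" for j s
  define B where "B j = (t * norm c) * (inverse (fact j) * (t^2 * norm c)^j)" for j
  have qb: "norm (q j s) \<le> B j" if s: "s \<in> {0..t}" for j s
  proof -
    have "norm (q j s) = \<bar>al j\<bar> * t * \<bar>t^2 - s^2\<bar>^j * norm c^(j+1)"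
      using t by (simp only: q_def norm_mult norm_of_real norm_power abs_mult power_abs abs_of_nonneg)
    also have "\<dots> \<le> (1 / fact j) * t * (t^2)^j * norm c^(j+1)"
      using s t by (intro mult_right_mono mult_mono al_abs1 power_mono sq_diff_le) auto
    also have "\<dots> = B j" by (simp add: B_def power_mult_distrib field_simps)
    finally show ?thesis .
  qed
  have sB: "summable B" unfolding B_def by (intro summable_mult summable_exp)
  have KL1: "(\<lambda>j. \<Sum>m. of_real (cs m) * (\<rho>^2)^m * (LINT s:{0..t}|lborel. q j s * of_real (s^(2*m))))
           sums (LINT s:{0..t}|lborel. (\<Sum>j. q j s) * cos (\<rho> * of_real s))"
    by (rule KL[OF t _ qb sB]) (unfold q_def, intro continuous_intros)
  have eqK: "(\<Sum>j. q j s) = Kf c t s" for s unfolding q_def Kf_def ..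
  have termeq: "(\<Sum>m. of_real (cs m) * (\<rho>^2)^m * (LINT s:{0..t}|lborel. q j s * of_real (s^(2*m)))) = c^(Suc j) * S (Suc j)" for j
  proof -
    have mo: "(LINT s:{0..t}|lborel. q j s * of_real (s^(2*m))) = of_real (al j * t * (t^(2*j+2*m+1) * Jc j m)) * c^(j+1)" for m
    proof -
      have "(LINT s:{0..t}|lborel. q j s * of_real (s^(2*m))) = (LINT s:{0..t}|lborel. of_real (al j * t * ((t^2 - s^2)^j * s^(2*m))) * c^(j+1))"
        unfolding q_def by (intro set_lebesgue_integral_cong allI impI) (auto simp: mult_ac)
      also have "\<dots> = of_real (al j * t * (t^(2*j+2*m+1) * Jc j m)) * c^(j+1)"
        unfolding lint_ofreal_const set_integral_mult_right moment[OF t] ..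
      finally show ?thesis .
    qed
    have tm: "of_real (cs m) * (\<rho>^2)^m * (LINT s:{0..t}|lborel. q j s * of_real (s^(2*m)))
        = c^(Suc j) * (a (m + Suc j) * of_nat ((m + Suc j) choose Suc j) * (\<rho>^2) ^ m)" for m
    proof -
      have ce: "cs (m+j+1) * real ((m+j+1) choose (j+1)) = cs m * al j * Jc j m" by (rule coefE)
      have "a (m + Suc j) * of_nat ((m + Suc j) choose Suc j) = of_real (cs (m+j+1) * real ((m+j+1) choose (j+1)) * t^(2*(m+j+1)))"
        by (simp add: a_def mult_ac)
      also have "\<dots> = of_real (cs m * al j * Jc j m * t^(2*(m+j+1)))" unfolding ce ..
      finally have "a (m + Suc j) * of_nat ((m + Suc j) choose Suc j) = of_real (cs m * al j * Jc j m * t^(2*(m+j+1)))" .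
      moreover have tt: "t * t^(2*j+2*m+1) = t^(2*(m+j+1))" by (simp add: power_Suc[symmetric] algebra_simps del: power_Suc)
      moreover have "al j * t * (t^(2*j+2*m+1) * Jc j m) = al j * Jc j m * (t * t^(2*j+2*m+1))" by (simp only: mult_ac)
      ultimately show ?thesis unfolding mo
        by (simp only: of_real_mult mult_ac Suc_eq_plus1)
    qed
    have "(\<Sum>m. of_real (cs m) * (\<rho>^2)^m * (LINT s:{0..t}|lborel. q j s * of_real (s^(2*m))))
        = (\<Sum>m. c^(Suc j) * (a (m + Suc j) * of_nat ((m + Suc j) choose Suc j) * (\<rho>^2) ^ m))"
      unfolding tm ..
    also have "\<dots> = c^(Suc j) * S (Suc j)"
      unfolding S_def using suminf_mult[OF rearr_summable[OF sa, of "Suc j" "\<rho>^2"], of "c^Suc j"] by simp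
    finally show ?thesis .
  qed
  from KL1 have "(\<lambda>j. c^(Suc j) * S (Suc j)) sums (LINT s:{0..t}|lborel. Kf c t s * cos (\<rho> * of_real s))"
    unfolding termeq eqK .
  with R1 show ?thesis by (simp add: sums_iff)
qed


definition Gf :: "complex \<Rightarrow> real \<Rightarrow> real \<Rightarrow> complex" where
  "Gf c T s = (\<Sum>j. of_real (- al j * T * ((T^2 - s^2)^j + 2 * real j * T^2 * (T^2 - s^2)^(j-1))) * c^(j+1))"

lemma gpoly_bound:
  fixes T s :: real assumes "0 \<le> s" "s \<le> T"
  shows "\<bar>(T^2 - s^2)^j + 2 * real j * T^2 * (T^2 - s^2)^(j-1)\<bar> \<le> (2 * real j + 1) * (T^2)^j"
proof (cases j)
  case 0 then show ?thesis by simp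
next
  case (Suc i)
  have a: "\<bar>T^2 - s^2\<bar> \<le> T^2" by (rule sq_diff_le) (use assms in auto)
  have "\<bar>(T^2 - s^2)^j + 2 * real j * T^2 * (T^2 - s^2)^(j-1)\<bar> \<le> \<bar>T^2 - s^2\<bar>^j + 2 * real j * T^2 * \<bar>T^2 - s^2\<bar>^(j-1)"
    by (rule order_trans[OF abs_triangle_ineq]) (simp add: abs_mult power_abs)
  also have "\<dots> \<le> (T^2)^j + 2 * real j * T^2 * (T^2)^(j-1)"
    by (intro add_mono mult_left_mono power_mono a) auto
  also have "\<dots> = (2 * real j + 1) * (T^2)^j" using Suc by (simp add: algebra_simps)
  finally show ?thesis .
qed

lemma E':
  fixes \<rho> c \<mu> :: complex and T :: real
  assumes T: "0 \<le> T" and \<mu>: "\<mu>^2 = \<rho>^2 + c"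
  shows "(LINT s:{0..T}|lborel. Gf c T s * cos (\<rho> * of_real s))
     = of_real T * \<mu> * sin (\<mu> * of_real T) - of_real T * \<rho> * sin (\<rho> * of_real T) - c * (of_real (T^2/2) * cos (\<rho> * of_real T))"
proof -
  define a where "a n = (of_real (bp n * T^(2*n)) :: complex)" for n
  define S where "S k = (\<Sum>m. a (m + k) * of_nat ((m + k) choose k) * (\<rho>^2) ^ m)" for k
  define D where "D = of_real (T^2/2) * cos (\<rho> * of_real T)"
  have sa: "summable (\<lambda>n. norm (a n) * r^n)" for r
  proof (rule summable_fact_bound[of _ "T^2 * \<bar>r\<bar>"])
    fix n
    have "norm (norm (a n) * r^n) = \<bar>bp n\<bar> * T^(2*n) * \<bar>r\<bar>^n"
      using T by (simp add: a_def norm_mult abs_mult power_abs norm_power)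
    also have "\<dots> \<le> 1 / fact n * T^(2*n) * \<bar>r\<bar>^n"
      using T by (intro mult_right_mono bp_abs) auto
    also have "\<dots> = (T^2 * \<bar>r\<bar>)^n / fact n" by (simp add: power_mult power_mult_distrib)
    finally show "norm (norm (a n) * r^n) \<le> (T^2 * \<bar>r\<bar>)^n / fact n" .
  qed
  have L: "(\<lambda>n. a n * (\<rho>^2 + c)^n) sums (of_real T * \<mu> * sin (\<mu> * of_real T))"
    using sin_ser[of T \<mu>] \<mu> by (simp add: a_def)
  have R: "(\<lambda>k. c^k * S k) sums (of_real T * \<mu> * sin (\<mu> * of_real T))"
    using rearr[OF sa, of c "\<rho>^2"] L unfolding S_def by (simp add: sums_iff)
  have S0: "S 0 = of_real T * \<rho> * sin (\<rho> * of_real T)"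
    using sin_ser[of T \<rho>] unfolding S_def a_def by (simp add: sums_iff)
  have R1: "(\<lambda>j. c^(Suc j) * S (Suc j)) sums (of_real T * \<mu> * sin (\<mu> * of_real T) - of_real T * \<rho> * sin (\<rho> * of_real T))"
    using sums_Suc_iff[where f="\<lambda>k. c^k * S k", THEN iffD2, of "of_real T * \<mu> * sin (\<mu> * of_real T) - of_real T * \<rho> * sin (\<rho> * of_real T)"] R S0
    by simp
  have R2: "(\<lambda>j. c^(Suc j) * S (Suc j) - (if j = 0 then c * D else 0)) sums
      (of_real T * \<mu> * sin (\<mu> * of_real T) - of_real T * \<rho> * sin (\<rho> * of_real T) - c * D)"
    by (rule sums_diff[OF R1]) (rule sums_single)
  define q where "q j s = of_real (- al j * T * ((T^2 - s^2)^j + 2 * real j * T^2 * (T^2 - s^2)^(j-1))) * c^(j+1)" for j s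
  define B where "B j = (T * norm c) * (inverse (fact j) * (T^2 * norm c)^j)" for j
  have qb: "norm (q j s) \<le> B j" if s: "s \<in> {0..T}" for j s
  proof -
    have "norm (q j s) = \<bar>al j\<bar> * T * \<bar>(T^2 - s^2)^j + 2 * real j * T^2 * (T^2 - s^2)^(j-1)\<bar> * norm c^(j+1)"
      using T by (simp only: q_def norm_mult norm_of_real norm_power abs_mult abs_minus_cancel abs_of_nonneg)
    also have "\<dots> \<le> \<bar>al j\<bar> * T * ((2 * real j + 1) * (T^2)^j) * norm c^(j+1)"
      using s T by (intro mult_right_mono mult_left_mono gpoly_bound) auto
    also have "\<dots> = (\<bar>al j\<bar> * (2 * real j + 1)) * T * (T^2)^j * norm c^(j+1)" by (simp only: mult_ac)
    also have "\<dots> \<le> (1 / fact j) * T * (T^2)^j * norm c^(j+1)"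
    proof (intro mult_right_mono)
      have "\<bar>al j\<bar> * (2 * real j + 1) * 1 \<le> \<bar>al j\<bar> * (2 * real j + 1) * (real j + 1)"
        by (intro mult_left_mono) auto
      then show "\<bar>al j\<bar> * (2 * real j + 1) \<le> 1 / fact j" using al_abs[of j] by (simp add: mult_ac)
    qed (use T in auto)
    also have "\<dots> = B j" by (simp add: B_def power_mult_distrib field_simps)
    finally show ?thesis .
  qed
  have sB: "summable B" unfolding B_def by (intro summable_mult summable_exp)
  have KL1: "(\<lambda>j. \<Sum>m. of_real (cs m) * (\<rho>^2)^m * (LINT s:{0..T}|lborel. q j s * of_real (s^(2*m))))
           sums (LINT s:{0..T}|lborel. (\<Sum>j. q j s) * cos (\<rho> * of_real s))"
    by (rule KL[OF T _ qb sB]) (unfold q_def, intro continuous_intros)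
  have eqG: "(\<Sum>j. q j s) = Gf c T s" for s unfolding q_def Gf_def ..
  have mo: "(LINT s:{0..T}|lborel. q j s * of_real (s^(2*m))) =
      of_real (- al j * T * (T^(2*j+2*m+1) * Jc j m + 2 * real j * T^2 * (T^(2*(j-1)+2*m+1) * Jc (j-1) m))) * c^(j+1)" for j m
  proof -
    have i1: "set_integrable lborel {0..T} (\<lambda>s. (T^2 - s^2)^i * s^(2*m))" for i
      by (rule borel_integrable_atLeastAtMost') (intro continuous_intros)
    have "(LINT s:{0..T}|lborel. q j s * of_real (s^(2*m))) = (LINT s:{0..T}|lborel. of_real (- al j * T * ((T^2 - s^2)^j * s^(2*m) + 2 * real j * T^2 * ((T^2 - s^2)^(j-1) * s^(2*m)))) * c^(j+1))"
      unfolding q_def by (intro set_lebesgue_integral_cong allI impI) (auto simp: algebra_simps)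
    also have "\<dots> = of_real (- al j * T * ((LINT s:{0..T}|lborel. (T^2 - s^2)^j * s^(2*m)) + 2 * real j * T^2 * (LINT s:{0..T}|lborel. (T^2 - s^2)^(j-1) * s^(2*m)))) * c^(j+1)"
      unfolding lint_ofreal_const set_integral_mult_right
      by (simp only: set_integral_add(2)[OF i1 set_integrable_mult_right[OF i1]] set_integral_mult_right)
    also have "\<dots> = of_real (- al j * T * (T^(2*j+2*m+1) * Jc j m + 2 * real j * T^2 * (T^(2*(j-1)+2*m+1) * Jc (j-1) m))) * c^(j+1)"
      unfolding moment[OF T] ..
    finally show ?thesis .
  qed
  have cosS: "(\<lambda>m. of_real (cs m * T^(2*m)) * (\<rho>^2)^m) sums cos (\<rho> * of_real T)" by (rule cos_ser)
  have termeq: "(\<Sum>m. of_real (cs m) * (\<rho>^2)^m * (LINT s:{0..T}|lborel. q j s * of_real (s^(2*m))))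
      = c^(Suc j) * S (Suc j) - (if j = 0 then c * D else 0)" for j
  proof (cases j)
    case 0
    have tm: "of_real (cs m) * (\<rho>^2)^m * (LINT s:{0..T}|lborel. q j s * of_real (s^(2*m)))
        = c * (a (m + 1) * of_nat ((m + 1) choose 1) * (\<rho>^2) ^ m) - c * (of_real (T^2/2) * (of_real (cs m * T^(2*m)) * (\<rho>^2)^m))" for m
    proof -
      have ce: "bp (m+1) * real (m+1) - cs m / 2 = cs m * (- al 0) * Jc 0 m" by (rule coefE'0)
      have "a (m + 1) * of_nat ((m + 1) choose 1) - of_real (T^2/2) * of_real (cs m * T^(2*m))
          = of_real ((bp (m+1) * real (m+1) - cs m / 2) * T^(2*m+2))"
        by (simp add: a_def algebra_simps power_add power2_eq_square)
      also have "\<dots> = of_real (cs m * (- al 0) * Jc 0 m * T^(2*m+2))" unfolding ce ..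
      finally have e: "a (m + 1) * of_nat ((m + 1) choose 1) - of_real (T^2/2) * of_real (cs m * T^(2*m))
          = of_real (cs m * (- al 0) * Jc 0 m * T^(2*m+2))" .
      have "c * (a (m + 1) * of_nat ((m + 1) choose 1) * (\<rho>^2) ^ m) - c * (of_real (T^2/2) * (of_real (cs m * T^(2*m)) * (\<rho>^2)^m))
          = c * (\<rho>^2)^m * (a (m + 1) * of_nat ((m + 1) choose 1) - of_real (T^2/2) * of_real (cs m * T^(2*m)))"
        by (simp add: algebra_simps)
      also have "\<dots> = c * (\<rho>^2)^m * of_real (cs m * (- al 0) * Jc 0 m * T^(2*m+2))" unfolding e ..
      also have "\<dots> = of_real (cs m) * (\<rho>^2)^m * (LINT s:{0..T}|lborel. q j s * of_real (s^(2*m)))"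
        unfolding mo 0 by (simp add: algebra_simps power_add power2_eq_square)
      finally show ?thesis ..
    qed
    have s1: "summable (\<lambda>m. a (m + 1) * of_nat ((m + 1) choose 1) * (\<rho>^2) ^ m)"
      using rearr_summable[OF sa, of 1 "\<rho>^2"] .
    have s2: "summable (\<lambda>m. of_real (cs m * T^(2*m)) * (\<rho>^2)^m)" using cosS by (rule sums_summable)
    have "(\<Sum>m. of_real (cs m) * (\<rho>^2)^m * (LINT s:{0..T}|lborel. q j s * of_real (s^(2*m))))
        = (\<Sum>m. c * (a (m + 1) * of_nat ((m + 1) choose 1) * (\<rho>^2) ^ m) - c * (of_real (T^2/2) * (of_real (cs m * T^(2*m)) * (\<rho>^2)^m)))"
      unfolding tm ..
    also have "\<dots> = c * S 1 - c * D"
    proof -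
      have "(\<lambda>m. c * (a (m + 1) * of_nat ((m + 1) choose 1) * (\<rho>^2) ^ m)) sums (c * S 1)"
        unfolding S_def by (rule sums_mult[OF summable_sums[OF s1]])
      moreover have "(\<lambda>m. c * (of_real (T^2/2) * (of_real (cs m * T^(2*m)) * (\<rho>^2)^m))) sums (c * D)"
        unfolding D_def by (intro sums_mult cosS)
      ultimately have "(\<lambda>m. c * (a (m + 1) * of_nat ((m + 1) choose 1) * (\<rho>^2) ^ m) - c * (of_real (T^2/2) * (of_real (cs m * T^(2*m)) * (\<rho>^2)^m))) sums (c * S 1 - c * D)"
        by (rule sums_diff)
      then show ?thesis by (rule sums_unique[symmetric])
    qed
    finally show ?thesis using 0 by simp
  next
    case (Suc i)
    have tm: "of_real (cs m) * (\<rho>^2)^m * (LINT s:{0..T}|lborel. q j s * of_real (s^(2*m)))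
        = c^(Suc j) * (a (m + Suc j) * of_nat ((m + Suc j) choose Suc j) * (\<rho>^2) ^ m)" for m
    proof -
      have ce: "bp (m+i+2) * real ((m+i+2) choose (i+2)) = cs m * (- al (i+1)) * (Jc (i+1) m + 2*real (i+1) * Jc i m)"
        by (rule coefE'S)
      have "a (m + Suc j) * of_nat ((m + Suc j) choose Suc j) = of_real (bp (m+i+2) * real ((m+i+2) choose (i+2)) * T^(2*(m+i+2)))"
        by (simp add: a_def Suc mult_ac)
      also have "\<dots> = of_real (cs m * (- al (i+1)) * (Jc (i+1) m + 2*real (i+1) * Jc i m) * T^(2*(m+i+2)))"
        unfolding ce ..
      finally have e: "a (m + Suc j) * of_nat ((m + Suc j) choose Suc j) = of_real (cs m * (- al (i+1)) * (Jc (i+1) m + 2*real (i+1) * Jc i m) * T^(2*(m+i+2)))" .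
      have p1: "T * T^(2*j+2*m+1) = T^(2*(m+i+2))" using Suc by (simp add: power_Suc[symmetric] algebra_simps del: power_Suc)
      have p2: "T * (T^2 * T^(2*(j-1)+2*m+1)) = T^(2*(m+i+2))" using Suc by (simp add: power_Suc[symmetric] power2_eq_square algebra_simps del: power_Suc)
      have "- al j * T * (T^(2*j+2*m+1) * Jc j m + 2 * real j * T^2 * (T^(2*(j-1)+2*m+1) * Jc (j-1) m))
          = - al (i+1) * (Jc (i+1) m * (T * T^(2*j+2*m+1)) + 2 * real (i+1) * Jc i m * (T * (T^2 * T^(2*(j-1)+2*m+1))))"
        using Suc by (simp add: algebra_simps)
      also have "\<dots> = - al (i+1) * (Jc (i+1) m + 2*real (i+1) * Jc i m) * T^(2*(m+i+2))"
        unfolding p1 p2 by (simp add: algebra_simps)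
      finally have e2: "- al j * T * (T^(2*j+2*m+1) * Jc j m + 2 * real j * T^2 * (T^(2*(j-1)+2*m+1) * Jc (j-1) m))
          = - al (i+1) * (Jc (i+1) m + 2*real (i+1) * Jc i m) * T^(2*(m+i+2))" .
      show ?thesis unfolding mo e2 e
        by (simp only: of_real_mult mult_ac Suc_eq_plus1)
    qed
    have "(\<Sum>m. of_real (cs m) * (\<rho>^2)^m * (LINT s:{0..T}|lborel. q j s * of_real (s^(2*m))))
        = (\<Sum>m. c^(Suc j) * (a (m + Suc j) * of_nat ((m + Suc j) choose Suc j) * (\<rho>^2) ^ m))"
      unfolding tm ..
    also have "\<dots> = c^(Suc j) * S (Suc j)"
      unfolding S_def using suminf_mult[OF rearr_summable[OF sa, of "Suc j" "\<rho>^2"], of "c^Suc j"] by simp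
    finally show ?thesis using Suc by simp
  qed
  from KL1 have "(\<lambda>j. c^(Suc j) * S (Suc j) - (if j = 0 then c * D else 0)) sums (LINT s:{0..T}|lborel. Gf c T s * cos (\<rho> * of_real s))"
    unfolding termeq eqG .
  with R2 show ?thesis unfolding D_def by (simp add: sums_iff)
qed


lemma pow_diff_bound:
  fixes c d :: complex
  assumes "norm c \<le> R" "norm d \<le> R"
  shows "norm (c^(Suc n) - d^(Suc n)) \<le> real (Suc n) * R^n * norm (c - d)"
proof (induction n)
  case 0 then show ?case by simp
next
  case (Suc n)
  have R0: "0 \<le> R" using assms(1) norm_ge_zero order_trans by blast
  have "c^(Suc (Suc n)) - d^(Suc (Suc n)) = c * (c^(Suc n) - d^(Suc n)) + (c - d) * d^(Suc n)"
    by (simp add: algebra_simps)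
  then have "norm (c^(Suc (Suc n)) - d^(Suc (Suc n))) \<le> norm c * norm (c^(Suc n) - d^(Suc n)) + norm (c - d) * norm d^(Suc n)"
    by (metis norm_triangle_ineq norm_mult norm_power order_trans order_refl)
  also have "\<dots> \<le> R * (real (Suc n) * R^n * norm (c - d)) + norm (c - d) * R^(Suc n)"
    using assms R0 by (intro add_mono mult_mono Suc.IH mult_left_mono power_mono) auto
  also have "\<dots> = real (Suc (Suc n)) * R^(Suc n) * norm (c - d)" by (simp add: algebra_simps)
  finally show ?case .
qed

lemma exp_ser: "(\<lambda>n. x^n / fact n) sums exp (x::real)"
  using exp_converges[of x] by (simp add: divide_inverse mult.commute)

lemma ser_bounds:
  fixes e :: "nat \<Rightarrow> complex"
  assumes eb: "\<And>j. norm (e j) * (real j + 1) \<le> E * X^j / fact j" and X: "0 \<le> X"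
  shows "summable (\<lambda>j. e j * c^(j+1))"
    and "norm (\<Sum>j. e j * c^(j+1)) \<le> E * norm c * exp (X * norm c)"
    and "norm c \<le> R \<Longrightarrow> norm d \<le> R \<Longrightarrow> norm ((\<Sum>j. e j * c^(j+1)) - (\<Sum>j. e j * d^(j+1))) \<le> E * exp (X * R) * norm (c - d)"
proof -
  have eb1: "norm (e j) \<le> E * X^j / fact j" for j
  proof -
    have "norm (e j) * 1 \<le> norm (e j) * (real j + 1)" by (intro mult_left_mono) auto
    then show ?thesis using eb[of j] by simp
  qed
  have sumexp: "(\<lambda>j. E * norm c * ((X * norm c)^j / fact j)) sums (E * norm c * exp (X * norm c))"
    by (intro sums_mult exp_ser)
  have nb: "norm (e j * c^(j+1)) \<le> E * norm c * ((X * norm c)^j / fact j)" for j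
  proof -
    have "norm (e j * c^(j+1)) = norm (e j) * norm c^(j+1)" by (simp add: norm_mult norm_power)
    also have "\<dots> \<le> E * X^j / fact j * norm c^(j+1)" by (intro mult_right_mono eb1) auto
    also have "\<dots> = E * norm c * ((X * norm c)^j / fact j)" by (simp add: power_mult_distrib field_simps)
    finally show ?thesis .
  qed
  have sn: "summable (\<lambda>j. norm (e j * c^(j+1)))"
    by (rule summable_comparison_test'[OF sums_summable[OF sumexp]]) (use nb in auto)
  then show "summable (\<lambda>j. e j * c^(j+1))" by (rule summable_norm_cancel)
  have "norm (\<Sum>j. e j * c^(j+1)) \<le> (\<Sum>j. norm (e j * c^(j+1)))" by (rule summable_norm[OF sn])
  also have "\<dots> \<le> (\<Sum>j. E * norm c * ((X * norm c)^j / fact j))"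
    by (rule suminf_le[OF nb sn sums_summable[OF sumexp]])
  also have "\<dots> = E * norm c * exp (X * norm c)" using sumexp by (simp add: sums_iff)
  finally show "norm (\<Sum>j. e j * c^(j+1)) \<le> E * norm c * exp (X * norm c)" .
  assume cR: "norm c \<le> R" and dR: "norm d \<le> R"
  have R0: "0 \<le> R" using cR norm_ge_zero order_trans by blast
  have sc: "summable (\<lambda>j. e j * c^(j+1))" using sn by (rule summable_norm_cancel)
  have sd: "summable (\<lambda>j. e j * d^(j+1))"
  proof -
    have nb': "norm (e j * d^(j+1)) \<le> E * norm d * ((X * norm d)^j / fact j)" for j
    proof -
      have "norm (e j * d^(j+1)) = norm (e j) * norm d^(j+1)" by (simp add: norm_mult norm_power)
      also have "\<dots> \<le> E * X^j / fact j * norm d^(j+1)" by (intro mult_right_mono eb1) auto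
      also have "\<dots> = E * norm d * ((X * norm d)^j / fact j)" by (simp add: power_mult_distrib field_simps)
      finally show ?thesis .
    qed
    have "summable (\<lambda>j. E * norm d * ((X * norm d)^j / fact j))"
      by (intro summable_mult sums_summable[OF exp_ser])
    then have "summable (\<lambda>j. norm (e j * d^(j+1)))"
      by (rule summable_comparison_test') (use nb' in auto)
    then show ?thesis by (rule summable_norm_cancel)
  qed
  have sumexp2: "(\<lambda>j. E * norm (c - d) * ((X * R)^j / fact j)) sums (E * norm (c - d) * exp (X * R))"
    by (intro sums_mult exp_ser)
  have nb2: "norm (e j * c^(j+1) - e j * d^(j+1)) \<le> E * norm (c - d) * ((X * R)^j / fact j)" for j
  proof -
    have "norm (e j * c^(j+1) - e j * d^(j+1)) = norm (e j) * norm (c^(Suc j) - d^(Suc j))"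
      by (simp add: norm_mult right_diff_distrib[symmetric])
    also have "\<dots> \<le> norm (e j) * (real (Suc j) * R^j * norm (c - d))"
      by (intro mult_left_mono pow_diff_bound cR dR) auto
    also have "\<dots> = (norm (e j) * (real j + 1)) * R^j * norm (c - d)" by (simp add: algebra_simps)
    also have "\<dots> \<le> (E * X^j / fact j) * R^j * norm (c - d)"
      using R0 by (intro mult_right_mono eb) auto
    also have "\<dots> = E * norm (c - d) * ((X * R)^j / fact j)" by (simp add: power_mult_distrib field_simps)
    finally show ?thesis .
  qed
  have "(\<Sum>j. e j * c^(j+1)) - (\<Sum>j. e j * d^(j+1)) = (\<Sum>j. e j * c^(j+1) - e j * d^(j+1))"
    by (rule suminf_diff[OF sc sd])
  then have "norm ((\<Sum>j. e j * c^(j+1)) - (\<Sum>j. e j * d^(j+1))) = norm (\<Sum>j. e j * c^(j+1) - e j * d^(j+1))" by simp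
  also have "\<dots> \<le> (\<Sum>j. norm (e j * c^(j+1) - e j * d^(j+1)))"
    by (rule summable_norm, rule summable_comparison_test'[OF sums_summable[OF sumexp2]]) (use nb2 in auto)
  also have "\<dots> \<le> (\<Sum>j. E * norm (c - d) * ((X * R)^j / fact j))"
    by (rule suminf_le[OF nb2 _ sums_summable[OF sumexp2]], rule summable_comparison_test'[OF sums_summable[OF sumexp2]]) (use nb2 in auto)
  also have "\<dots> = E * exp (X * R) * norm (c - d)" using sumexp2 by (simp add: sums_iff mult_ac)
  finally show "norm ((\<Sum>j. e j * c^(j+1)) - (\<Sum>j. e j * d^(j+1))) \<le> E * exp (X * R) * norm (c - d)" .
qed

lemma al_abs2: "\<bar>al j\<bar> * (real j + 1) \<le> 1 / fact j"
proof -
  have "\<bar>al j\<bar> * (real j + 1) * 1 \<le> \<bar>al j\<bar> * (real j + 1) * (2 * real j + 1)" by (intro mult_left_mono) auto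
  then show ?thesis using al_abs[of j] by simp
qed

lemma Kf_coef:
  assumes "0 \<le> s" "s \<le> t" "t \<le> T"
  shows "norm (of_real (al j * t * (t^2 - s^2)^j) :: complex) * (real j + 1) \<le> T * (T^2)^j / fact j"
proof -
  have "norm (of_real (al j * t * (t^2 - s^2)^j) :: complex) * (real j + 1) = (\<bar>al j\<bar> * (real j + 1)) * (t * \<bar>t^2 - s^2\<bar>^j)"
    using assms by (simp only: norm_of_real abs_mult power_abs abs_of_nonneg order_trans[OF assms(1,2)]) (simp add: mult_ac)
  also have "\<dots> \<le> (1 / fact j) * (T * (T^2)^j)"
  proof (rule mult_mono[OF al_abs2])
    have "\<bar>t^2 - s^2\<bar> \<le> T^2" using sq_diff_le[of s t] assms power_mono[of t T 2] by linarith
    then show "t * \<bar>t^2 - s^2\<bar>^j \<le> T * (T^2)^j" using assms by (intro mult_mono power_mono) auto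
  qed (use assms in auto)
  finally show ?thesis by simp
qed

lemma Gf_coef:
  assumes "0 \<le> s" "s \<le> T"
  shows "norm (of_real (- al j * T * ((T^2 - s^2)^j + 2 * real j * T^2 * (T^2 - s^2)^(j-1))) :: complex) * (real j + 1) \<le> T * (T^2)^j / fact j"
proof -
  have "norm (of_real (- al j * T * ((T^2 - s^2)^j + 2 * real j * T^2 * (T^2 - s^2)^(j-1))) :: complex) * (real j + 1)
     = (\<bar>al j\<bar> * (real j + 1)) * (T * \<bar>(T^2 - s^2)^j + 2 * real j * T^2 * (T^2 - s^2)^(j-1)\<bar>)"
    using assms by (simp only: norm_of_real abs_mult abs_minus_cancel abs_of_nonneg order_trans[OF assms(1,2)]) (simp add: mult_ac)
  also have "\<dots> \<le> (\<bar>al j\<bar> * (real j + 1)) * (T * ((2 * real j + 1) * (T^2)^j))"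
    using assms by (intro mult_left_mono gpoly_bound) auto
  also have "\<dots> = (\<bar>al j\<bar> * (real j + 1) * (2 * real j + 1)) * (T * (T^2)^j)" by (simp add: mult_ac)
  also have "\<dots> \<le> (1 / fact j) * (T * (T^2)^j)"
    using assms by (intro mult_right_mono al_abs) auto
  finally show ?thesis by simp
qed

lemma Kf_bounds:
  assumes "0 \<le> s" "s \<le> t" "t \<le> T"
  shows "norm (Kf c t s) \<le> T * norm c * exp (T^2 * norm c)"
    and "norm c \<le> R \<Longrightarrow> norm d \<le> R \<Longrightarrow> norm (Kf c t s - Kf d t s) \<le> T * exp (T^2 * R) * norm (c - d)"
  using ser_bounds[where X="T^2" and E=T, OF Kf_coef[OF assms]] unfolding Kf_def by auto

lemma Gf_bounds:
  assumes "0 \<le> s" "s \<le> T"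
  shows "norm (Gf c T s) \<le> T * norm c * exp (T^2 * norm c)"
    and "norm c \<le> R \<Longrightarrow> norm d \<le> R \<Longrightarrow> norm (Gf c T s - Gf d T s) \<le> T * exp (T^2 * R) * norm (c - d)"
  using ser_bounds[where X="T^2" and E=T, OF Gf_coef[OF assms]] unfolding Gf_def by auto


lemma Kf_coef_gen:
  "norm (of_real (al j * t * (t^2 - s^2)^j) :: complex) * (real j + 1) \<le> \<bar>t\<bar> * \<bar>t^2 - s^2\<bar>^j / fact j"
proof -
  have "norm (of_real (al j * t * (t^2 - s^2)^j) :: complex) * (real j + 1) = (\<bar>al j\<bar> * (real j + 1)) * (\<bar>t\<bar> * \<bar>t^2 - s^2\<bar>^j)"
    by (simp only: norm_of_real abs_mult power_abs) (simp add: mult_ac)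
  also have "\<dots> \<le> (1 / fact j) * (\<bar>t\<bar> * \<bar>t^2 - s^2\<bar>^j)"
    by (rule mult_right_mono[OF al_abs2]) auto
  finally show ?thesis by simp
qed

lemma Kf_summable: "summable (\<lambda>j. of_real (al j * t * (t^2 - s^2)^j) * c^(j+1))" for c :: complex
  using ser_bounds(1)[where X="\<bar>t^2 - s^2\<bar>" and E="\<bar>t\<bar>", OF Kf_coef_gen] by auto

lemma gpoly_bound_gen:
  fixes T s :: real
  shows "\<bar>(T^2 - s^2)^j + 2 * real j * T^2 * (T^2 - s^2)^(j-1)\<bar> \<le> (2 * real j + 1) * (T^2 + \<bar>T^2 - s^2\<bar>)^j"
proof (cases j)
  case 0 then show ?thesis by simp
next
  case (Suc i)
  define Y where "Y = T^2 + \<bar>T^2 - s^2\<bar>"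
  have a: "\<bar>T^2 - s^2\<bar> \<le> Y" "T^2 \<le> Y" "0 \<le> T^2" by (auto simp: Y_def)
  have "\<bar>(T^2 - s^2)^j + 2 * real j * T^2 * (T^2 - s^2)^(j-1)\<bar> \<le> \<bar>T^2 - s^2\<bar>^j + 2 * real j * T^2 * \<bar>T^2 - s^2\<bar>^(j-1)"
    by (rule order_trans[OF abs_triangle_ineq]) (simp add: abs_mult power_abs)
  also have "\<dots> \<le> Y^j + 2 * real j * Y * Y^(j-1)"
    using a by (intro add_mono mult_mono power_mono mult_left_mono) auto
  also have "\<dots> = (2 * real j + 1) * Y^j" using Suc by (simp add: algebra_simps)
  finally show ?thesis unfolding Y_def .
qed

lemma Gf_coef_gen:
  "norm (of_real (- al j * T * ((T^2 - s^2)^j + 2 * real j * T^2 * (T^2 - s^2)^(j-1))) :: complex) * (real j + 1)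
     \<le> \<bar>T\<bar> * (T^2 + \<bar>T^2 - s^2\<bar>)^j / fact j"
proof -
  have "norm (of_real (- al j * T * ((T^2 - s^2)^j + 2 * real j * T^2 * (T^2 - s^2)^(j-1))) :: complex) * (real j + 1)
     = (\<bar>al j\<bar> * (real j + 1)) * (\<bar>T\<bar> * \<bar>(T^2 - s^2)^j + 2 * real j * T^2 * (T^2 - s^2)^(j-1)\<bar>)"
    by (simp only: norm_of_real abs_mult abs_minus_cancel) (simp add: mult_ac)
  also have "\<dots> \<le> (\<bar>al j\<bar> * (real j + 1)) * (\<bar>T\<bar> * ((2 * real j + 1) * (T^2 + \<bar>T^2 - s^2\<bar>)^j))"
    by (intro mult_left_mono gpoly_bound_gen) auto
  also have "\<dots> = (\<bar>al j\<bar> * (real j + 1) * (2 * real j + 1)) * (\<bar>T\<bar> * (T^2 + \<bar>T^2 - s^2\<bar>)^j)" by (simp add: mult_ac)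
  also have "\<dots> \<le> (1 / fact j) * (\<bar>T\<bar> * (T^2 + \<bar>T^2 - s^2\<bar>)^j)"
    by (intro mult_right_mono al_abs) auto
  finally show ?thesis by simp
qed

lemma Gf_summable: "summable (\<lambda>j. of_real (- al j * T * ((T^2 - s^2)^j + 2 * real j * T^2 * (T^2 - s^2)^(j-1))) * c^(j+1))" for c :: complex
  using ser_bounds(1)[where X="T^2 + \<bar>T^2 - s^2\<bar>" and E="\<bar>T\<bar>", OF Gf_coef_gen] by auto

lemma meas_ser:
  fixes e :: "nat \<Rightarrow> 'a \<Rightarrow> complex"
  assumes m: "\<And>j. e j \<in> borel_measurable M" and s: "\<And>x. summable (\<lambda>j. e j x * c^(j+1))"
  shows "(\<lambda>x. \<Sum>j. e j x * c^(j+1)) \<in> borel_measurable M"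
proof (rule borel_measurable_LIMSEQ_metric[where f="\<lambda>i x. \<Sum>j<i. e j x * c^(j+1)"])
  show "(\<lambda>x. \<Sum>j<i. e j x * c^(j+1)) \<in> borel_measurable M" for i
    using m by measurable
  show "(\<lambda>i. \<Sum>j<i. e j x * c^(j+1)) \<longlonglongrightarrow> (\<Sum>j. e j x * c^(j+1))" for x
    by (rule summable_LIMSEQ[OF s])
qed

lemma Kf_meas: "(\<lambda>p. Kf c (fst p) (snd p)) \<in> borel_measurable (lborel \<Otimes>\<^sub>M lborel)"
  unfolding Kf_def by (rule meas_ser[OF _ Kf_summable]) measurable

lemma Kf_meas': "(\<lambda>p. Kf c (snd p) (fst p)) \<in> borel_measurable (lborel \<Otimes>\<^sub>M lborel)"
  unfolding Kf_def by (rule meas_ser[OF _ Kf_summable]) measurable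

lemma Kf_meas1: "(\<lambda>s. Kf c T s) \<in> borel_measurable lborel"
  unfolding Kf_def by (rule meas_ser[OF _ Kf_summable]) measurable

lemma Gf_meas1: "(\<lambda>s. Gf c T s) \<in> borel_measurable lborel"
  unfolding Gf_def by (rule meas_ser[OF _ Gf_summable]) measurable

lemma L2_meas: "L2_0pi N \<Longrightarrow> (\<lambda>t. indicator {0..pi} t *\<^sub>R N t) \<in> borel_measurable lborel"
  unfolding L2_0pi_def set_borel_measurable_def by simp

lemma le_1_sq: "x \<le> 1 + x^2" for x :: real
proof -
  have "0 \<le> (x - 1/2)^2" by simp
  then show ?thesis by (simp add: power2_eq_square algebra_simps)
qed

lemma L2_integrable:
  assumes "L2_0pi N"
  shows "set_integrable lborel {0..pi} N"
proof -
  have m: "(\<lambda>t. indicator {0..pi} t *\<^sub>R N t) \<in> borel_measurable lborel" using L2_meas[OF assms] .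
  have i2: "integrable lborel (\<lambda>t. indicator {0..pi} t *\<^sub>R (cmod (N t))\<^sup>2)"
    using assms unfolding L2_0pi_def set_integrable_def by simp
  have i1: "integrable lborel (\<lambda>t. indicator {0..pi} t *\<^sub>R (1::real))"
    using borel_integrable_atLeastAtMost'[of 0 pi "\<lambda>_. 1::real"] unfolding set_integrable_def by simp
  have "integrable lborel (\<lambda>t. indicator {0..pi} t *\<^sub>R (1::real) + indicator {0..pi} t *\<^sub>R (cmod (N t))\<^sup>2)"
    by (rule Bochner_Integration.integrable_add[OF i1 i2])
  then show ?thesis unfolding set_integrable_def
  proof (rule Bochner_Integration.integrable_bound[OF _ m], intro AE_I2)
    fix t
    have "cmod (N t) \<le> 1 + (cmod (N t))\<^sup>2" by (rule le_1_sq)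
    then show "norm (indicator {0..pi} t *\<^sub>R N t) \<le> norm (indicator {0..pi} t *\<^sub>R (1::real) + indicator {0..pi} t *\<^sub>R (cmod (N t))\<^sup>2)"
      by (auto split: split_indicator)
  qed
qed


lemma const_int: "integrable lborel (\<lambda>s. indicator {0..pi} s *\<^sub>R (C::real))"
  using borel_integrable_atLeastAtMost'[of 0 pi "\<lambda>_. C"] unfolding set_integrable_def by simp

lemma const_integral: "(\<integral>s. indicator {0..pi} s *\<^sub>R (C::real) \<partial>lborel) = C * pi"
  by (simp add: mult.commute)

lemma fubini_N:
  fixes c \<rho> :: complex
  assumes N: "L2_0pi N"
  shows "(LINT t:{0..pi}|lborel. N t * (LINT s:{0..t}|lborel. Kf c t s * cos (\<rho> * of_real s)))
       = (LINT s:{0..pi}|lborel. (LINT t:{0..pi}|lborel. (if s \<le> t then N t * Kf c t s else 0)) * cos (\<rho> * of_real s))"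
proof -
  define N' where "N' t = indicator {0..pi} t *\<^sub>R N t" for t
  have mN[measurable]: "N' \<in> borel_measurable lborel" using L2_meas[OF N] unfolding N'_def .
  have iN: "integrable lborel (\<lambda>t. norm (N' t))"
    using L2_integrable[OF N] unfolding set_integrable_def N'_def by (rule integrable_norm)
  define Kb where "Kb = pi * norm c * exp (pi^2 * norm c)"
  define Cb where "Cb = exp (norm \<rho> * pi)"
  have Kb0: "0 \<le> Kb" "0 \<le> Cb" by (auto simp: Kb_def Cb_def)
  define F where "F t s = indicator {0..pi} s *\<^sub>R (if s \<le> t then N' t * Kf c t s * cos (\<rho> * of_real s) else 0)" for t s
  note Kf_meas[measurable]
  have mF[measurable]: "(\<lambda>p. F (fst p) (snd p)) \<in> borel_measurable (lborel \<Otimes>\<^sub>M lborel)"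
    unfolding F_def by measurable
  have mF1[measurable]: "(\<lambda>s. F t s) \<in> borel_measurable lborel" for t
    using measurable_Pair2[OF mF, of t] by simp
  have Fb: "norm (F t s) \<le> indicator {0..pi} s *\<^sub>R (norm (N' t) * Kb * Cb)" for t s
  proof (cases "s \<in> {0..pi} \<and> s \<le> t \<and> t \<in> {0..pi}")
    case True
    have k: "norm (Kf c t s) \<le> Kb" unfolding Kb_def by (rule Kf_bounds(1)) (use True in auto)
    have "norm (cos (\<rho> * of_real s)) \<le> exp (norm (\<rho> * of_real s))" by (rule norm_cos_le)
    also have "\<dots> \<le> Cb" unfolding Cb_def using True by (auto simp: norm_mult intro!: mult_left_mono)
    finally have cb: "norm (cos (\<rho> * of_real s)) \<le> Cb" .
    have "norm (F t s) = norm (N' t) * norm (Kf c t s) * norm (cos (\<rho> * of_real s))"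
      using True by (simp add: F_def norm_mult)
    also have "\<dots> \<le> norm (N' t) * Kb * Cb"
      using k cb Kb0 by (intro mult_mono mult_left_mono) auto
    finally show ?thesis using True by simp
  next
    case False
    then show ?thesis using Kb0 by (auto simp: F_def N'_def split: split_indicator)
  qed
  have iF2: "integrable lborel (\<lambda>s. F t s)" for t
    by (rule Bochner_Integration.integrable_bound[OF const_int[of "norm (N' t) * Kb * Cb"] mF1 AE_I2])
       (rule order_trans[OF Fb], use Kb0 in \<open>auto split: split_indicator\<close>)
  have int_s: "(\<integral>s. norm (F t s) \<partial>lborel) \<le> norm (N' t) * Kb * Cb * pi" for t
  proof -
    have "(\<integral>s. norm (F t s) \<partial>lborel) \<le> (\<integral>s. indicator {0..pi} s *\<^sub>R (norm (N' t) * Kb * Cb) \<partial>lborel)"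
      by (rule integral_mono[OF integrable_norm[OF iF2] const_int Fb])
    then show ?thesis unfolding const_integral .
  qed
  have iF: "integrable (lborel \<Otimes>\<^sub>M lborel) (\<lambda>p. F (fst p) (snd p))"
  proof (rule lborel_pair.Fubini_integrable[OF mF])
    have m2: "(\<lambda>t. \<integral>s. norm (F (fst (t, s)) (snd (t, s))) \<partial>lborel) \<in> borel_measurable lborel"
      by measurable
    show "integrable lborel (\<lambda>t. \<integral>s. norm (F (fst (t, s)) (snd (t, s))) \<partial>lborel)"
    proof (rule Bochner_Integration.integrable_bound[OF integrable_mult_right[OF iN, of "Kb * Cb * pi"] m2 AE_I2])
      fix t
      have "norm (\<integral>s. norm (F t s) \<partial>lborel) = (\<integral>s. norm (F t s) \<partial>lborel)" by simp
      also have "\<dots> \<le> norm (N' t) * Kb * Cb * pi" by (rule int_s)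
      finally show "norm (\<integral>s. norm (F (fst (t, s)) (snd (t, s))) \<partial>lborel) \<le> norm (Kb * Cb * pi * norm (N' t))"
        using Kb0 by (simp add: mult_ac)
    qed
    show "AE t in lborel. integrable lborel (\<lambda>s. F (fst (t, s)) (snd (t, s)))"
      using iF2 by simp
  qed
  have fub: "(\<integral>s. (\<integral>t. F t s \<partial>lborel) \<partial>lborel) = (\<integral>t. (\<integral>s. F t s \<partial>lborel) \<partial>lborel)"
    by (rule lborel_pair.Fubini_integral) (use iF in \<open>simp add: split_beta'\<close>)
  have L: "(\<integral>s. F t s \<partial>lborel) = indicator {0..pi} t *\<^sub>R (N t * (LINT s:{0..t}|lborel. Kf c t s * cos (\<rho> * of_real s)))" for t
  proof (cases "t \<in> {0..pi}")
    case True
    have "(\<integral>s. F t s \<partial>lborel) = (\<integral>s. N t * (indicator {0..t} s *\<^sub>R (Kf c t s * cos (\<rho> * of_real s))) \<partial>lborel)"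
      by (intro Bochner_Integration.integral_cong) (use True in \<open>auto simp: F_def N'_def split: split_indicator\<close>)
    also have "\<dots> = N t * (LINT s:{0..t}|lborel. Kf c t s * cos (\<rho> * of_real s))"
      unfolding set_lebesgue_integral_def by (rule integral_mult_right_zero)
    finally show ?thesis using True by simp
  next
    case False
    then have n0: "N' t = 0" by (simp add: N'_def)
    have "F t s = 0" for s unfolding F_def n0 by simp
    then show ?thesis using False by simp
  qed
  have R: "(\<integral>t. F t s \<partial>lborel) = indicator {0..pi} s *\<^sub>R ((LINT t:{0..pi}|lborel. (if s \<le> t then N t * Kf c t s else 0)) * cos (\<rho> * of_real s))" for s
  proof -
    have "(\<integral>t. F t s \<partial>lborel) = (\<integral>t. indicator {0..pi} s *\<^sub>R ((indicator {0..pi} t *\<^sub>R (if s \<le> t then N t * Kf c t s else 0)) * cos (\<rho> * of_real s)) \<partial>lborel)"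
      by (intro Bochner_Integration.integral_cong) (auto simp: F_def N'_def split: split_indicator)
    also have "\<dots> = indicator {0..pi} s *\<^sub>R ((LINT t:{0..pi}|lborel. (if s \<le> t then N t * Kf c t s else 0)) * cos (\<rho> * of_real s))"
      unfolding set_lebesgue_integral_def integral_scaleR_right integral_mult_left_zero ..
    finally show ?thesis .
  qed
  show ?thesis
    using fub unfolding L R set_lebesgue_integral_def by simp
qed


definition TN :: "(real \<Rightarrow> complex) \<Rightarrow> complex \<Rightarrow> real \<Rightarrow> complex" where
  "TN N c s = (LINT t:{0..pi}|lborel. (if s \<le> t then N t * Kf c t s else 0))"

definition Mf :: "(real \<Rightarrow> complex) \<Rightarrow> complex \<Rightarrow> real \<Rightarrow> complex" where
  "Mf N (\<omega>::complex) s = - Gf (complex_of_real (2 / pi) * \<omega>) pi s / of_real pi + \<omega> * Kf (complex_of_real (2 / pi) * \<omega>) pi s + N s + TN N (complex_of_real (2 / pi) * \<omega>) s"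

lemma set_integrable_bdd:
  fixes f :: "real \<Rightarrow> complex"
  assumes m: "f \<in> borel_measurable lborel" and b: "\<And>s. s \<in> {0..pi} \<Longrightarrow> norm (f s) \<le> B"
  shows "set_integrable lborel {0..pi} f"
  unfolding set_integrable_def
proof (rule Bochner_Integration.integrable_bound[OF const_int[of B] _ AE_I2])
  show "(\<lambda>x. indicator {0..pi} x *\<^sub>R f x) \<in> borel_measurable lborel" using m by measurable
  fix x
  show "norm (indicator {0..pi} x *\<^sub>R f x) \<le> norm (indicator {0..pi} x *\<^sub>R B)"
    using b[of x] by (auto split: split_indicator)
qed

lemma TN_meas:
  assumes N: "L2_0pi N"
  shows "TN N c \<in> borel_measurable lborel"
proof -
  define N' where "N' t = indicator {0..pi} t *\<^sub>R N t" for t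
  have mN[measurable]: "N' \<in> borel_measurable lborel" using L2_meas[OF N] unfolding N'_def .
  note Kf_meas'[measurable]
  have e: "TN N c s = (\<integral>t. (if s \<le> t then N' t * Kf c t s else 0) \<partial>lborel)" for s
    unfolding TN_def set_lebesgue_integral_def N'_def
    by (intro Bochner_Integration.integral_cong) (auto split: split_indicator)
  have "(\<lambda>(s,t). (if s \<le> t then N' t * Kf c t s else 0)) \<in> borel_measurable (lborel \<Otimes>\<^sub>M lborel)"
    by measurable
  then have "(\<lambda>s. \<integral>t. (if s \<le> t then N' t * Kf c t s else 0) \<partial>lborel) \<in> borel_measurable lborel"
    by (rule lborel.borel_measurable_lebesgue_integral)
  then show ?thesis unfolding e[abs_def] .
qed

lemma cos_bound: "s \<in> {0..pi} \<Longrightarrow> norm (cos (\<rho> * of_real s)) \<le> exp (norm \<rho> * pi)" for \<rho> :: complex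
  by (rule order_trans[OF norm_cos_le]) (auto simp: norm_mult intro!: mult_left_mono)

lemma L1_N_mult_int:
  assumes N: "L2_0pi N" and m: "g \<in> borel_measurable lborel" and b: "\<And>s. s \<in> {0..pi} \<Longrightarrow> norm (g s) \<le> B"
  shows "set_integrable lborel {0..pi} (\<lambda>t. N t * g t)"
  unfolding set_integrable_def
proof (rule Bochner_Integration.integrable_bound[OF integrable_mult_right[OF integrable_norm[OF L2_integrable[OF N, unfolded set_integrable_def]], of B] _ AE_I2])
  have "(\<lambda>t. indicator {0..pi} t *\<^sub>R N t) \<in> borel_measurable lborel" by (rule L2_meas[OF N])
  then have "(\<lambda>x. (indicator {0..pi} x *\<^sub>R N x) * g x) \<in> borel_measurable lborel" using m by measurable
  then show "(\<lambda>x. indicator {0..pi} x *\<^sub>R (N x * g x)) \<in> borel_measurable lborel" by simp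
  fix x
  have "norm (indicator {0..pi} x *\<^sub>R (N x * g x)) \<le> B * norm (indicator {0..pi} x *\<^sub>R N x)"
  proof (cases "x \<in> {0..pi}")
    case True
    have "norm (N x) * norm (g x) \<le> norm (N x) * B" by (rule mult_left_mono[OF b[OF True]]) simp
    then show ?thesis using True by (simp add: norm_mult mult.commute)
  qed simp
  then show "norm (indicator {0..pi} x *\<^sub>R (N x * g x)) \<le> norm (B * norm (indicator {0..pi} x *\<^sub>R N x))"
    by (rule order_trans) simp
qed

lemma TN_bound:
  assumes N: "L2_0pi N" and s: "s \<in> {0..pi}"
  shows "norm (TN N c s) \<le> (pi * norm c * exp (pi^2 * norm c)) * (LINT t:{0..pi}|lborel. norm (N t))"
proof -
  define Kb where "Kb = pi * norm c * exp (pi^2 * norm c)"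
  note Kf_meas'[measurable]
  have mK[measurable]: "(\<lambda>t. Kf c t s) \<in> borel_measurable lborel"
    using measurable_Pair2[OF Kf_meas', of s] by simp
  have m: "(\<lambda>t. if s \<le> t then Kf c t s else 0) \<in> borel_measurable lborel"
    by measurable
  have bb: "norm (if s \<le> t then Kf c t s else 0) \<le> Kb" if "t \<in> {0..pi}" for t
    using Kf_bounds(1)[of s t pi c] s that by (auto simp: Kb_def)
  have i: "set_integrable lborel {0..pi} (\<lambda>t. N t * (if s \<le> t then Kf c t s else 0))"
    by (rule L1_N_mult_int[OF N m bb])
  have iN: "set_integrable lborel {0..pi} (\<lambda>t. norm (N t) * Kb)"
  proof -
    have h: "integrable lborel (\<lambda>x. norm (indicator {0..pi} x *\<^sub>R N x) * Kb)"
      using L2_integrable[OF N] unfolding set_integrable_def by (intro integrable_mult_left integrable_norm)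
    show ?thesis unfolding set_integrable_def
      by (rule Bochner_Integration.integrable_cong[OF refl, THEN iffD2, OF _ h]) (auto split: split_indicator)
  qed
  have "norm (TN N c s) = norm (LINT t:{0..pi}|lborel. N t * (if s \<le> t then Kf c t s else 0))"
    unfolding TN_def by (rule arg_cong[where f=norm], intro set_lebesgue_integral_cong allI impI) auto
  also have "\<dots> \<le> (LINT t:{0..pi}|lborel. norm (N t * (if s \<le> t then Kf c t s else 0)))"
    by (rule set_integral_norm_bound[OF i])
  also have "\<dots> \<le> (LINT t:{0..pi}|lborel. norm (N t) * Kb)"
  proof (rule set_integral_mono[OF set_integrable_norm[OF i] iN])
    fix t assume t: "t \<in> {0..pi}"
    show "norm (N t * (if s \<le> t then Kf c t s else 0)) \<le> norm (N t) * Kb"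
      unfolding norm_mult by (rule mult_left_mono[OF bb[OF t]]) simp
  qed
  also have "\<dots> = Kb * (LINT t:{0..pi}|lborel. norm (N t))"
    by (simp add: mult.commute)
  finally show ?thesis unfolding Kb_def .
qed


lemma L1_nonneg: "0 \<le> (LINT t:A|lborel. norm (f t :: complex))"
  unfolding set_lebesgue_integral_def by (rule Bochner_Integration.integral_nonneg) (auto simp: indicator_def)

lemma identity:
  fixes \<omega> \<rho> :: complex
  assumes N: "L2_0pi N"
  shows "Delta N \<omega> (csqrt (\<rho>\<^sup>2 + complex_of_real (2 / pi) * \<omega>))
       = - \<rho> * sin (\<rho> * pi) + (LINT t:{0..pi}|lborel. Mf N \<omega> t * cos (\<rho> * of_real t))"
proof -
  define c where "c = complex_of_real (2 / pi) * \<omega>"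
  define \<mu> where "\<mu> = csqrt (\<rho>\<^sup>2 + c)"
  have \<mu>2: "\<mu>^2 = \<rho>^2 + c" by (simp add: \<mu>_def)
  have pi0: "complex_of_real pi \<noteq> 0" by simp
  have c_eq: "c = 2 * \<omega> / of_real pi" by (simp add: c_def)
  define Cb where "Cb = exp (norm \<rho> * pi)"
  define Cm where "Cm = exp (norm \<mu> * pi)"
  have mcos[measurable]: "(\<lambda>s. cos (z * of_real s)) \<in> borel_measurable lborel" for z :: complex
    by measurable
  note Kf_meas1[measurable] Gf_meas1[measurable] TN_meas[OF N, measurable]
  have Ep: "(LINT s:{0..pi}|lborel. Gf c pi s * cos (\<rho> * of_real s))
     = of_real pi * \<mu> * sin (\<mu> * of_real pi) - of_real pi * \<rho> * sin (\<rho> * of_real pi) - c * (of_real (pi^2/2) * cos (\<rho> * of_real pi))"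
    by (rule E'[OF _ \<mu>2]) simp
  have Epi: "(LINT s:{0..pi}|lborel. Kf c pi s * cos (\<rho> * of_real s)) = cos (\<mu> * of_real pi) - cos (\<rho> * of_real pi)"
    by (rule E[OF _ \<mu>2]) simp
  have iG: "set_integrable lborel {0..pi} (\<lambda>s. Gf c pi s * cos (\<rho> * of_real s))"
  proof (rule set_integrable_bdd)
    show "(\<lambda>s. Gf c pi s * cos (\<rho> * of_real s)) \<in> borel_measurable lborel" by measurable
    fix s assume s: "s \<in> {0..pi}"
    show "norm (Gf c pi s * cos (\<rho> * of_real s)) \<le> (pi * norm c * exp (pi^2 * norm c)) * Cb"
      unfolding norm_mult Cb_def using Gf_bounds(1)[of s pi c] s cos_bound[OF s, of \<rho>]
      by (intro mult_mono) auto
  qed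
  have iK: "set_integrable lborel {0..pi} (\<lambda>s. Kf c pi s * cos (\<rho> * of_real s))"
  proof (rule set_integrable_bdd)
    show "(\<lambda>s. Kf c pi s * cos (\<rho> * of_real s)) \<in> borel_measurable lborel" by measurable
    fix s assume s: "s \<in> {0..pi}"
    show "norm (Kf c pi s * cos (\<rho> * of_real s)) \<le> (pi * norm c * exp (pi^2 * norm c)) * Cb"
      unfolding norm_mult Cb_def using Kf_bounds(1)[of s pi pi c] s cos_bound[OF s, of \<rho>]
      by (intro mult_mono) auto
  qed
  have iNr: "set_integrable lborel {0..pi} (\<lambda>t. N t * cos (\<rho> * of_real t))"
    by (rule L1_N_mult_int[OF N mcos cos_bound])
  have iNm: "set_integrable lborel {0..pi} (\<lambda>t. N t * cos (\<mu> * of_real t))"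
    by (rule L1_N_mult_int[OF N mcos cos_bound])
  have iT: "set_integrable lborel {0..pi} (\<lambda>s. TN N c s * cos (\<rho> * of_real s))"
  proof (rule set_integrable_bdd)
    show "(\<lambda>s. TN N c s * cos (\<rho> * of_real s)) \<in> borel_measurable lborel" by measurable
    fix s assume s: "s \<in> {0..pi}"
    show "norm (TN N c s * cos (\<rho> * of_real s)) \<le> ((pi * norm c * exp (pi^2 * norm c)) * (LINT t:{0..pi}|lborel. norm (N t))) * Cb"
      unfolding norm_mult Cb_def using TN_bound[OF N s, of c] cos_bound[OF s, of \<rho>]
      by (intro mult_mono) (auto intro!: mult_nonneg_nonneg L1_nonneg)
  qed
  have NN: "(LINT t:{0..pi}|lborel. N t * cos (\<mu> * of_real t)) = (LINT t:{0..pi}|lborel. N t * cos (\<rho> * of_real t)) + (LINT s:{0..pi}|lborel. TN N c s * cos (\<rho> * of_real s))"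
  proof -
    have "(LINT t:{0..pi}|lborel. N t * (LINT s:{0..t}|lborel. Kf c t s * cos (\<rho> * of_real s)))
        = (LINT t:{0..pi}|lborel. N t * cos (\<mu> * of_real t) - N t * cos (\<rho> * of_real t))"
    proof (intro set_lebesgue_integral_cong allI impI)
      fix t :: real assume t: "t \<in> {0..pi}"
      show "N t * (LINT s:{0..t}|lborel. Kf c t s * cos (\<rho> * of_real s)) = N t * cos (\<mu> * of_real t) - N t * cos (\<rho> * of_real t)"
      proof -
        have "(LINT s:{0..t}|lborel. Kf c t s * cos (\<rho> * of_real s)) = cos (\<mu> * of_real t) - cos (\<rho> * of_real t)"
          using E[OF _ \<mu>2, of t] t by simp
        then show ?thesis by (simp add: right_diff_distrib)
      qed
    qed simp
    also have "\<dots> = (LINT t:{0..pi}|lborel. N t * cos (\<mu> * of_real t)) - (LINT t:{0..pi}|lborel. N t * cos (\<rho> * of_real t))"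
      by (rule set_integral_diff(2)[OF iNm iNr])
    finally have a: "(LINT t:{0..pi}|lborel. N t * (LINT s:{0..t}|lborel. Kf c t s * cos (\<rho> * of_real s)))
        = (LINT t:{0..pi}|lborel. N t * cos (\<mu> * of_real t)) - (LINT t:{0..pi}|lborel. N t * cos (\<rho> * of_real t))" .
    have b: "(LINT t:{0..pi}|lborel. N t * (LINT s:{0..t}|lborel. Kf c t s * cos (\<rho> * of_real s)))
        = (LINT s:{0..pi}|lborel. TN N c s * cos (\<rho> * of_real s))"
      unfolding TN_def by (rule fubini_N[OF N])
    show ?thesis using a b by (simp add: algebra_simps)
  qed
  have MM: "(LINT t:{0..pi}|lborel. Mf N \<omega> t * cos (\<rho> * of_real t))
     = - (LINT s:{0..pi}|lborel. Gf c pi s * cos (\<rho> * of_real s)) / of_real pi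
       + \<omega> * (LINT s:{0..pi}|lborel. Kf c pi s * cos (\<rho> * of_real s))
       + (LINT t:{0..pi}|lborel. N t * cos (\<rho> * of_real t))
       + (LINT s:{0..pi}|lborel. TN N c s * cos (\<rho> * of_real s))"
  proof -
    have i1: "set_integrable lborel {0..pi} (\<lambda>s. (- 1 / of_real pi) * (Gf c pi s * cos (\<rho> * of_real s)))"
      by (rule set_integrable_mult_right[OF iG])
    have i2: "set_integrable lborel {0..pi} (\<lambda>s. \<omega> * (Kf c pi s * cos (\<rho> * of_real s)))"
      by (rule set_integrable_mult_right[OF iK])
    have "(LINT t:{0..pi}|lborel. Mf N \<omega> t * cos (\<rho> * of_real t))
        = (LINT s:{0..pi}|lborel. (- 1 / of_real pi) * (Gf c pi s * cos (\<rho> * of_real s)) + \<omega> * (Kf c pi s * cos (\<rho> * of_real s))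
             + N s * cos (\<rho> * of_real s) + TN N c s * cos (\<rho> * of_real s))"
      unfolding Mf_def c_def[symmetric] by (intro set_lebesgue_integral_cong allI impI) (auto simp: algebra_simps)
    also have "\<dots> = (LINT s:{0..pi}|lborel. (- 1 / of_real pi) * (Gf c pi s * cos (\<rho> * of_real s)))
        + (LINT s:{0..pi}|lborel. \<omega> * (Kf c pi s * cos (\<rho> * of_real s)))
        + (LINT t:{0..pi}|lborel. N t * cos (\<rho> * of_real t))
        + (LINT s:{0..pi}|lborel. TN N c s * cos (\<rho> * of_real s))"
      by (simp only: set_integral_add(2)[OF set_integral_add(1)[OF set_integral_add(1)[OF i1 i2] iNr] iT]
          set_integral_add(2)[OF set_integral_add(1)[OF i1 i2] iNr] set_integral_add(2)[OF i1 i2])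
    finally show ?thesis by (simp only: set_integral_mult_right) simp
  qed
  have "Delta N \<omega> \<mu> = - \<mu> * sin (\<mu> * pi) + \<omega> * cos (\<mu> * pi) + (LINT t:{0..pi}|lborel. N t * cos (\<mu> * of_real t))"
    unfolding Delta_def ..
  also have "\<dots> = - \<rho> * sin (\<rho> * pi) + (LINT t:{0..pi}|lborel. Mf N \<omega> t * cos (\<rho> * of_real t))"
    apply (unfold MM NN Ep Epi)
    apply (unfold c_eq)
    using pi0 by (simp add: field_simps power2_eq_square)
  finally show ?thesis unfolding \<mu>_def c_def .
qed


lemma lint_const: "(LINT t:{0..pi}|lborel. (C::real)) = C * pi"
  unfolding set_lebesgue_integral_def by (rule const_integral)

lemma sq_int: "L2_0pi f \<Longrightarrow> set_integrable lborel {0..pi} (\<lambda>t. (cmod (f t))\<^sup>2)"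
  unfolding L2_0pi_def by simp

lemma L2_sq_nonneg: "0 \<le> (LINT t:{0..pi}|lborel. (cmod (f t))\<^sup>2)"
  unfolding set_lebesgue_integral_def by (rule Bochner_Integration.integral_nonneg) (auto simp: indicator_def)

lemma amgm: "0 < e \<Longrightarrow> a \<le> e / 2 + a^2 / (2 * e)" for a e :: real
proof -
  assume e: "0 < e"
  have "0 \<le> (a - e)^2" by simp
  then have "2 * e * a \<le> e^2 + a^2" by (simp add: power2_eq_square algebra_simps)
  then show ?thesis using e by (simp add: field_simps power2_eq_square)
qed

lemma L1_le_L2:
  assumes f: "L2_0pi f"
  shows "(LINT t:{0..pi}|lborel. norm (f t)) \<le> sqrt pi * L2_norm_0pi f"
proof -
  define I where "I = (LINT t:{0..pi}|lborel. (cmod (f t))\<^sup>2)"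
  define L where "L = (LINT t:{0..pi}|lborel. norm (f t))"
  have I0: "0 \<le> I" unfolding I_def by (rule L2_sq_nonneg)
  have iL: "set_integrable lborel {0..pi} (\<lambda>t. norm (f t))"
    using L2_integrable[OF f] by (rule set_integrable_norm)
  have iI: "set_integrable lborel {0..pi} (\<lambda>t. (cmod (f t))\<^sup>2)" by (rule sq_int[OF f])
  have key: "L \<le> e * pi / 2 + I / (2 * e)" if e: "0 < e" for e
  proof -
    have ic: "set_integrable lborel {0..pi} (\<lambda>t. e / 2)"
      by (rule borel_integrable_atLeastAtMost') simp
    have i2: "set_integrable lborel {0..pi} (\<lambda>t. e / 2 + (cmod (f t))\<^sup>2 / (2 * e))"
      by (rule set_integral_add(1)[OF ic set_integrable_divide[OF iI]])
    have "L \<le> (LINT t:{0..pi}|lborel. e / 2 + (cmod (f t))\<^sup>2 / (2 * e))"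
      unfolding L_def by (rule set_integral_mono[OF iL i2]) (rule amgm[OF e])
    also have "\<dots> = (LINT t:{0..pi}|lborel. e / 2) + (LINT t:{0..pi}|lborel. (cmod (f t))\<^sup>2 / (2 * e))"
      by (rule set_integral_add(2)[OF ic set_integrable_divide[OF iI]])
    also have "\<dots> = e * pi / 2 + I / (2 * e)"
      unfolding I_def by (simp add: set_integral_divide_zero lint_const)
    finally show ?thesis .
  qed
  have "L \<le> sqrt pi * sqrt I"
  proof (cases "I = 0")
    case True
    show ?thesis
    proof (rule ccontr)
      assume "\<not> ?thesis"
      then have Lp: "0 < L" using True by simp
      have "L \<le> (L / pi) * pi / 2 + I / (2 * (L / pi))" by (rule key) (use Lp in simp)
      then show False using True Lp by simp
    qed
  next
    case False
    then have Ip: "0 < I" using I0 by simp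
    define e where "e = sqrt (I / pi)"
    have ep: "0 < e" using Ip by (simp add: e_def)
    have "L \<le> e * pi / 2 + I / (2 * e)" by (rule key[OF ep])
    also have "\<dots> = sqrt pi * sqrt I"
    proof -
      have sp: "sqrt pi * sqrt pi = pi" "sqrt I * sqrt I = I" using Ip by auto
      have e2: "e = sqrt I / sqrt pi" by (simp add: e_def real_sqrt_divide)
      have "sqrt pi > 0" "sqrt I > 0" using Ip by auto
      then show ?thesis unfolding e2 using sp
        by (simp add: field_simps)
    qed
    finally show ?thesis .
  qed
  then show ?thesis unfolding L_def I_def L2_norm_0pi_def .
qed

lemma L2_dom:
  assumes m: "set_borel_measurable lborel {0..pi} f"
    and h: "set_integrable lborel {0..pi} h"
    and b: "\<And>s. s \<in> {0..pi} \<Longrightarrow> (cmod (f s))\<^sup>2 \<le> h s"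
  shows "L2_0pi f"
  unfolding L2_0pi_def
proof (intro conjI m)
  have m2: "(\<lambda>s. indicator {0..pi} s *\<^sub>R (cmod (f s))\<^sup>2) \<in> borel_measurable lborel"
  proof -
    have "(\<lambda>s. (cmod (indicator {0..pi} s *\<^sub>R f s))\<^sup>2) \<in> borel_measurable lborel"
      using m unfolding set_borel_measurable_def by measurable
    moreover have "(\<lambda>s. (cmod (indicator {0..pi} s *\<^sub>R f s))\<^sup>2) = (\<lambda>s. indicator {0..pi} s *\<^sub>R (cmod (f s))\<^sup>2)"
      by (auto simp: fun_eq_iff split: split_indicator)
    ultimately show ?thesis by simp
  qed
  show "set_integrable lborel {0..pi} (\<lambda>t. (cmod (f t))\<^sup>2)"
    unfolding set_integrable_def
  proof (rule Bochner_Integration.integrable_bound[OF h[unfolded set_integrable_def] m2 AE_I2])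
    fix x
    show "norm (indicator {0..pi} x *\<^sub>R (cmod (f x))\<^sup>2) \<le> norm (indicator {0..pi} x *\<^sub>R h x)"
      using b[of x] by (auto split: split_indicator)
  qed
qed

lemma L2_bound:
  assumes g: "L2_0pi g" and m: "set_borel_measurable lborel {0..pi} f" and P: "0 \<le> P"
    and b: "\<And>s. s \<in> {0..pi} \<Longrightarrow> norm (f s) \<le> norm (g s) + P"
  shows "L2_0pi f" and "L2_norm_0pi f \<le> sqrt 2 * (L2_norm_0pi g + sqrt pi * P)"
proof -
  have ig: "set_integrable lborel {0..pi} (\<lambda>t. (cmod (g t))\<^sup>2)" by (rule sq_int[OF g])
  have ic: "set_integrable lborel {0..pi} (\<lambda>t. 2 * P^2)"
    by (rule borel_integrable_atLeastAtMost') simp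
  have ih: "set_integrable lborel {0..pi} (\<lambda>t. 2 * (cmod (g t))\<^sup>2 + 2 * P^2)"
    by (rule set_integral_add(1)[OF set_integrable_mult_right[OF ig] ic])
  have pb: "(cmod (f s))\<^sup>2 \<le> 2 * (cmod (g s))\<^sup>2 + 2 * P^2" if s: "s \<in> {0..pi}" for s
  proof -
    have "(cmod (f s))\<^sup>2 \<le> (cmod (g s) + P)\<^sup>2" using b[OF s] by (intro power_mono) auto
    also have "\<dots> \<le> 2 * (cmod (g s))\<^sup>2 + 2 * P^2"
    proof -
      have "0 \<le> (cmod (g s) - P)^2" by simp
      then show ?thesis by (simp add: power2_eq_square algebra_simps)
    qed
    finally show ?thesis .
  qed
  show L2f: "L2_0pi f" by (rule L2_dom[OF m ih pb])
  have "(LINT t:{0..pi}|lborel. (cmod (f t))\<^sup>2) \<le> (LINT t:{0..pi}|lborel. 2 * (cmod (g t))\<^sup>2 + 2 * P^2)"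
    by (rule set_integral_mono[OF sq_int[OF L2f] ih pb])
  also have "\<dots> = 2 * (LINT t:{0..pi}|lborel. (cmod (g t))\<^sup>2) + 2 * P^2 * pi"
    by (simp add: set_integral_add(2)[OF set_integrable_mult_right[OF ig] ic] lint_const mult.commute)
  finally have I: "(LINT t:{0..pi}|lborel. (cmod (f t))\<^sup>2) \<le> 2 * (L2_norm_0pi g)^2 + 2 * (sqrt pi * P)^2"
    unfolding L2_norm_0pi_def using L2_sq_nonneg[of g] by (simp add: power_mult_distrib mult_ac)
  define a where "a = L2_norm_0pi g"
  define b' where "b' = sqrt pi * P"
  have a0: "0 \<le> a" "0 \<le> b'" using P L2_sq_nonneg[of g] by (auto simp: a_def b'_def L2_norm_0pi_def)
  have "2 * a^2 + 2 * b'^2 \<le> (sqrt 2 * (a + b'))^2"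
    using a0 by (simp add: power_mult_distrib power2_eq_square algebra_simps)
  then have "(LINT t:{0..pi}|lborel. (cmod (f t))\<^sup>2) \<le> (sqrt 2 * (a + b'))^2"
    using I unfolding a_def b'_def by linarith
  then have "sqrt (LINT t:{0..pi}|lborel. (cmod (f t))\<^sup>2) \<le> sqrt ((sqrt 2 * (a + b'))^2)"
    by (rule real_sqrt_le_mono)
  also have "\<dots> = sqrt 2 * (a + b')" using a0 by simp
  finally show "L2_norm_0pi f \<le> sqrt 2 * (L2_norm_0pi g + sqrt pi * P)"
    unfolding L2_norm_0pi_def a_def b'_def .
qed


definition Kb :: "real \<Rightarrow> real" where "Kb R = pi * R * exp (pi^2 * R)"
definition LK :: "real \<Rightarrow> real" where "LK R = pi * exp (pi^2 * R)"

lemma Kb_nonneg: "0 \<le> R \<Longrightarrow> 0 \<le> Kb R" by (simp add: Kb_def)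
lemma LK_nonneg: "0 \<le> LK R" by (simp add: LK_def)

lemma Kb_mono: "norm c \<le> R \<Longrightarrow> pi * norm c * exp (pi^2 * norm c) \<le> Kb R" for c :: complex
proof -
  assume cR: "norm c \<le> R"
  then have "0 \<le> R" using norm_ge_zero order_trans by blast
  then show ?thesis unfolding Kb_def using cR by (intro mult_mono) auto
qed

lemma Kf_b: fixes c :: complex
  assumes "norm c \<le> R" "0 \<le> s" "s \<le> t" "t \<le> pi" shows "norm (Kf c t s) \<le> Kb R"
  using Kf_bounds(1)[OF assms(2,3,4), of c] Kb_mono[OF assms(1)] by linarith

lemma Gf_b: fixes c :: complex
  assumes "norm c \<le> R" "0 \<le> s" "s \<le> pi" shows "norm (Gf c pi s) \<le> Kb R"
  using Gf_bounds(1)[OF assms(2,3), of c] Kb_mono[OF assms(1)] by linarith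

lemma Kf_L: fixes c d :: complex
  assumes "norm c \<le> R" "norm d \<le> R" "0 \<le> s" "s \<le> t" "t \<le> pi"
  shows "norm (Kf c t s - Kf d t s) \<le> LK R * norm (c - d)"
  using Kf_bounds(2)[OF assms(3,4,5) assms(1,2)] by (simp add: LK_def)

lemma Gf_L: fixes c d :: complex
  assumes "norm c \<le> R" "norm d \<le> R" "0 \<le> s" "s \<le> pi"
  shows "norm (Gf c pi s - Gf d pi s) \<le> LK R * norm (c - d)"
  using Gf_bounds(2)[OF assms(3,4) assms(1,2)] by (simp add: LK_def)

lemma TN_diff:
  assumes N1: "L2_0pi N1" and N2: "L2_0pi N2" and s: "s \<in> {0..pi}"
    and c1: "norm c1 \<le> R" and c2: "norm c2 \<le> R"
  shows "norm (TN N1 c1 s - TN N2 c2 s) \<le> Kb R * (LINT t:{0..pi}|lborel. norm (N1 t - N2 t)) + LK R * norm (c1 - c2) * (LINT t:{0..pi}|lborel. norm (N2 t))"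
proof -
  have R0: "0 \<le> R" using c1 norm_ge_zero order_trans by blast
  note Kf_meas'[measurable]
  have mK[measurable]: "(\<lambda>t. Kf c t s) \<in> borel_measurable lborel" for c
    using measurable_Pair2[OF Kf_meas', of s] by simp
  define k1 where "k1 t = (if s \<le> t then Kf c1 t s else 0)" for t
  define k2 where "k2 t = (if s \<le> t then Kf c2 t s else 0)" for t
  have m1: "k1 \<in> borel_measurable lborel" unfolding k1_def by measurable
  have m2: "k2 \<in> borel_measurable lborel" unfolding k2_def by measurable
  have b1: "norm (k1 t) \<le> Kb R" if "t \<in> {0..pi}" for t
    using Kf_b[OF c1, of s t] s that Kb_nonneg[OF R0] by (auto simp: k1_def)
  have b2: "norm (k2 t) \<le> Kb R" if "t \<in> {0..pi}" for t
    using Kf_b[OF c2, of s t] s that Kb_nonneg[OF R0] by (auto simp: k2_def)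
  have dk: "norm (k1 t - k2 t) \<le> LK R * norm (c1 - c2)" if "t \<in> {0..pi}" for t
    using Kf_L[OF c1 c2, of s t] s that LK_nonneg[of R] by (auto simp: k1_def k2_def)
  have i1: "set_integrable lborel {0..pi} (\<lambda>t. N1 t * k1 t)" by (rule L1_N_mult_int[OF N1 m1 b1])
  have i2: "set_integrable lborel {0..pi} (\<lambda>t. N2 t * k2 t)" by (rule L1_N_mult_int[OF N2 m2 b2])
  have e1: "TN N1 c1 s = (LINT t:{0..pi}|lborel. N1 t * k1 t)"
    unfolding TN_def k1_def by (intro set_lebesgue_integral_cong allI impI) auto
  have e2: "TN N2 c2 s = (LINT t:{0..pi}|lborel. N2 t * k2 t)"
    unfolding TN_def k2_def by (intro set_lebesgue_integral_cong allI impI) auto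
  have iD: "set_integrable lborel {0..pi} (\<lambda>t. N1 t - N2 t)"
    by (rule set_integral_diff(1)[OF L2_integrable[OF N1] L2_integrable[OF N2]])
  have iA: "set_integrable lborel {0..pi} (\<lambda>t. norm (N1 t - N2 t) * Kb R + norm (N2 t) * (LK R * norm (c1 - c2)))"
    by (intro set_integral_add(1) set_integrable_mult_left set_integrable_norm iD L2_integrable[OF N2])
  have "norm (TN N1 c1 s - TN N2 c2 s) = norm (LINT t:{0..pi}|lborel. N1 t * k1 t - N2 t * k2 t)"
    unfolding e1 e2 set_integral_diff(2)[OF i1 i2] ..
  also have "\<dots> \<le> (LINT t:{0..pi}|lborel. norm (N1 t * k1 t - N2 t * k2 t))"
    by (rule set_integral_norm_bound[OF set_integral_diff(1)[OF i1 i2]])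
  also have "\<dots> \<le> (LINT t:{0..pi}|lborel. norm (N1 t - N2 t) * Kb R + norm (N2 t) * (LK R * norm (c1 - c2)))"
  proof (rule set_integral_mono[OF set_integrable_norm[OF set_integral_diff(1)[OF i1 i2]] iA])
    fix t assume t: "t \<in> {0..pi}"
    have "N1 t * k1 t - N2 t * k2 t = (N1 t - N2 t) * k1 t + N2 t * (k1 t - k2 t)" by (simp add: algebra_simps)
    then have "norm (N1 t * k1 t - N2 t * k2 t) \<le> norm (N1 t - N2 t) * norm (k1 t) + norm (N2 t) * norm (k1 t - k2 t)"
      by (metis norm_mult norm_triangle_ineq)
    also have "\<dots> \<le> norm (N1 t - N2 t) * Kb R + norm (N2 t) * (LK R * norm (c1 - c2))"
      by (intro add_mono mult_left_mono b1 dk t) auto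
    finally show "norm (N1 t * k1 t - N2 t * k2 t) \<le> norm (N1 t - N2 t) * Kb R + norm (N2 t) * (LK R * norm (c1 - c2))" .
  qed
  also have "\<dots> = (LINT t:{0..pi}|lborel. norm (N1 t - N2 t) * Kb R) + (LINT t:{0..pi}|lborel. norm (N2 t) * (LK R * norm (c1 - c2)))"
    by (rule set_integral_add(2)[OF set_integrable_mult_left[OF set_integrable_norm[OF iD]] set_integrable_mult_left[OF set_integrable_norm[OF L2_integrable[OF N2]]]])
  also have "\<dots> = Kb R * (LINT t:{0..pi}|lborel. norm (N1 t - N2 t)) + LK R * norm (c1 - c2) * (LINT t:{0..pi}|lborel. norm (N2 t))"
    by (simp only: set_integral_mult_left) (simp add: mult_ac)
  finally show ?thesis .
qed

lemma Mf_meas: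
  assumes N: "L2_0pi N"
  shows "set_borel_measurable lborel {0..pi} (Mf N \<omega>)"
proof -
  note Kf_meas1[measurable] Gf_meas1[measurable] TN_meas[OF N, measurable] L2_meas[OF N, measurable]
  have e: "(\<lambda>s. indicator {0..pi} s *\<^sub>R Mf N \<omega> s) = (\<lambda>s. indicator {0..pi} s *\<^sub>R (- Gf (complex_of_real (2 / pi) * \<omega>) pi s / of_real pi + \<omega> * Kf (complex_of_real (2 / pi) * \<omega>) pi s + TN N (complex_of_real (2 / pi) * \<omega>) s) + indicator {0..pi} s *\<^sub>R N s)"
    by (auto simp: fun_eq_iff Mf_def algebra_simps split: split_indicator)
  show ?thesis unfolding set_borel_measurable_def e by measurable
qed


lemma L2_diff:
  assumes N1: "L2_0pi N1" and N2: "L2_0pi N2"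
  shows "L2_0pi (\<lambda>t. N1 t - N2 t)"
proof (rule L2_dom)
  have "(\<lambda>t. indicator {0..pi} t *\<^sub>R N1 t - indicator {0..pi} t *\<^sub>R N2 t) \<in> borel_measurable lborel"
    using L2_meas[OF N1] L2_meas[OF N2] by measurable
  then show "set_borel_measurable lborel {0..pi} (\<lambda>t. N1 t - N2 t)"
    unfolding set_borel_measurable_def by (simp add: scaleR_diff_right)
  show "set_integrable lborel {0..pi} (\<lambda>t. 2 * (cmod (N1 t))\<^sup>2 + 2 * (cmod (N2 t))\<^sup>2)"
    by (intro set_integral_add(1) set_integrable_mult_right sq_int N1 N2)
  fix s
  have "(cmod (N1 s - N2 s))\<^sup>2 \<le> (cmod (N1 s) + cmod (N2 s))\<^sup>2"
    by (intro power_mono norm_triangle_ineq4) auto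
  also have "\<dots> \<le> 2 * (cmod (N1 s))\<^sup>2 + 2 * (cmod (N2 s))\<^sup>2"
  proof -
    have "0 \<le> (cmod (N1 s) - cmod (N2 s))^2" by simp
    then show ?thesis by (simp add: power2_eq_square algebra_simps)
  qed
  finally show "(cmod (N1 s - N2 s))\<^sup>2 \<le> 2 * (cmod (N1 s))\<^sup>2 + 2 * (cmod (N2 s))\<^sup>2" .
qed

lemma L2_norm_nonneg: "0 \<le> L2_norm_0pi f"
  unfolding L2_norm_0pi_def using L2_sq_nonneg[of f] by simp

lemma c_norm: "norm (complex_of_real (2 / pi) * \<omega>) = 2 / pi * norm \<omega>"
proof -
  have "norm (complex_of_real (2 / pi) * \<omega>) = \<bar>2 / pi\<bar> * norm \<omega>" by (simp only: norm_mult norm_of_real)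
  then show ?thesis by simp
qed

lemma M_single:
  fixes \<omega> :: complex
  assumes N: "L2_0pi N" and nN: "L2_norm_0pi N \<le> W" and w: "norm \<omega> \<le> W"
  defines "R \<equiv> 2 / pi * W"
  shows "L2_0pi (Mf N \<omega>)"
    and "L2_norm_0pi (Mf N \<omega>) \<le> sqrt 2 * (W + sqrt pi * (Kb R / pi + W * Kb R + Kb R * (sqrt pi * W)))"
proof -
  define c where "c = complex_of_real (2 / pi) * \<omega>"
  have W0: "0 \<le> W" using w norm_ge_zero order_trans by blast
  have R0: "0 \<le> R" using W0 by (simp add: R_def)
  have cR: "norm c \<le> R" unfolding c_def c_norm R_def using w by (simp add: divide_right_mono)
  have KbR: "0 \<le> Kb R" by (rule Kb_nonneg[OF R0])
  define P0 where "P0 = Kb R / pi + W * Kb R + Kb R * (sqrt pi * W)"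
  have P0: "0 \<le> P0" unfolding P0_def using KbR W0 by simp
  have L1: "(LINT t:{0..pi}|lborel. norm (N t)) \<le> sqrt pi * W"
    using L1_le_L2[OF N] nN by (meson mult_left_mono order_trans real_sqrt_ge_zero pi_ge_zero)
  have b: "norm (Mf N \<omega> s) \<le> norm (N s) + P0" if s: "s \<in> {0..pi}" for s
  proof -
    have g: "norm (Gf c pi s) \<le> Kb R" by (rule Gf_b[OF cR]) (use s in auto)
    have k: "norm (Kf c pi s) \<le> Kb R" by (rule Kf_b[OF cR]) (use s in auto)
    have t: "norm (TN N c s) \<le> Kb R * (sqrt pi * W)"
    proof -
      have "norm (TN N c s) \<le> (pi * norm c * exp (pi^2 * norm c)) * (LINT t:{0..pi}|lborel. norm (N t))"
        by (rule TN_bound[OF N s])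
      also have "\<dots> \<le> Kb R * (sqrt pi * W)"
        by (intro mult_mono Kb_mono cR L1 KbR L1_nonneg)
      finally show ?thesis .
    qed
    have "norm (Mf N \<omega> s) \<le> norm (Gf c pi s) / pi + norm \<omega> * norm (Kf c pi s) + norm (N s) + norm (TN N c s)"
      unfolding Mf_def c_def[symmetric]
      by (rule order_trans[OF norm_triangle_ineq] add_mono order_trans[OF norm_triangle_ineq])+
         (simp_all add: norm_mult norm_divide)
    also have "\<dots> \<le> Kb R / pi + W * Kb R + norm (N s) + Kb R * (sqrt pi * W)"
      using g k t w W0 by (intro add_mono mult_mono divide_right_mono) auto
    finally show ?thesis unfolding P0_def by simp
  qed
  show L2M: "L2_0pi (Mf N \<omega>)" by (rule L2_bound(1)[OF N Mf_meas[OF N] P0 b])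
  have "L2_norm_0pi (Mf N \<omega>) \<le> sqrt 2 * (L2_norm_0pi N + sqrt pi * P0)"
    by (rule L2_bound(2)[OF N Mf_meas[OF N] P0 b])
  also have "\<dots> \<le> sqrt 2 * (W + sqrt pi * P0)"
    using nN by (intro mult_left_mono add_right_mono) auto
  finally show "L2_norm_0pi (Mf N \<omega>) \<le> sqrt 2 * (W + sqrt pi * (Kb R / pi + W * Kb R + Kb R * (sqrt pi * W)))"
    unfolding P0_def .
qed

lemma M_diff:
  fixes \<omega>1 \<omega>2 :: complex
  assumes N1: "L2_0pi N1" and N2: "L2_0pi N2" and nN2: "L2_norm_0pi N2 \<le> W"
    and w1: "norm \<omega>1 \<le> W" and w2: "norm \<omega>2 \<le> W"
  defines "R \<equiv> 2 / pi * W"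
  defines "A \<equiv> LK R * (2 / pi) / pi + W * LK R * (2 / pi) + Kb R + LK R * (2 / pi) * (sqrt pi * W)"
  defines "B \<equiv> Kb R * sqrt pi"
  shows "L2_norm_0pi (\<lambda>s. Mf N1 \<omega>1 s - Mf N2 \<omega>2 s)
     \<le> sqrt 2 * (L2_norm_0pi (\<lambda>t. N1 t - N2 t) + sqrt pi * (A * norm (\<omega>1 - \<omega>2) + B * L2_norm_0pi (\<lambda>t. N1 t - N2 t)))"
proof -
  define c1 where "c1 = complex_of_real (2 / pi) * \<omega>1"
  define c2 where "c2 = complex_of_real (2 / pi) * \<omega>2"
  have W0: "0 \<le> W" using w1 norm_ge_zero order_trans by blast
  have R0: "0 \<le> R" using W0 by (simp add: R_def)
  have c1R: "norm c1 \<le> R" unfolding c1_def c_norm R_def using w1 by (simp add: divide_right_mono)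
  have c2R: "norm c2 \<le> R" unfolding c2_def c_norm R_def using w2 by (simp add: divide_right_mono)
  have dc: "norm (c1 - c2) = 2 / pi * norm (\<omega>1 - \<omega>2)"
    unfolding c1_def c2_def right_diff_distrib[symmetric] c_norm ..
  have KbR: "0 \<le> Kb R" by (rule Kb_nonneg[OF R0])
  have LKR: "0 \<le> LK R" by (rule LK_nonneg)
  have ND: "L2_0pi (\<lambda>t. N1 t - N2 t)" by (rule L2_diff[OF N1 N2])
  define P where "P = A * norm (\<omega>1 - \<omega>2) + B * L2_norm_0pi (\<lambda>t. N1 t - N2 t)"
  have A0: "0 \<le> A" unfolding A_def using KbR LKR W0 by (intro add_nonneg_nonneg mult_nonneg_nonneg) auto
  have B0: "0 \<le> B" unfolding B_def using KbR by simp
  have P0: "0 \<le> P" unfolding P_def using A0 B0 L2_norm_nonneg by (intro add_nonneg_nonneg mult_nonneg_nonneg) auto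
  have mD: "set_borel_measurable lborel {0..pi} (\<lambda>s. Mf N1 \<omega>1 s - Mf N2 \<omega>2 s)"
  proof -
    have "(\<lambda>s. indicator {0..pi} s *\<^sub>R Mf N1 \<omega>1 s - indicator {0..pi} s *\<^sub>R Mf N2 \<omega>2 s) \<in> borel_measurable lborel"
      using Mf_meas[OF N1, of \<omega>1] Mf_meas[OF N2, of \<omega>2] unfolding set_borel_measurable_def by measurable
    then show ?thesis unfolding set_borel_measurable_def by (simp add: scaleR_diff_right)
  qed
  have L1D: "(LINT t:{0..pi}|lborel. norm (N1 t - N2 t)) \<le> sqrt pi * L2_norm_0pi (\<lambda>t. N1 t - N2 t)"
    by (rule L1_le_L2[OF ND])
  have L12: "(LINT t:{0..pi}|lborel. norm (N2 t)) \<le> sqrt pi * W"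
    using L1_le_L2[OF N2] nN2 by (meson mult_left_mono order_trans real_sqrt_ge_zero pi_ge_zero)
  have b: "norm (Mf N1 \<omega>1 s - Mf N2 \<omega>2 s) \<le> norm (N1 s - N2 s) + P" if s: "s \<in> {0..pi}" for s
  proof -
    have g: "norm (Gf c1 pi s - Gf c2 pi s) \<le> LK R * norm (c1 - c2)" by (rule Gf_L[OF c1R c2R]) (use s in auto)
    have k: "norm (Kf c1 pi s - Kf c2 pi s) \<le> LK R * norm (c1 - c2)" by (rule Kf_L[OF c1R c2R]) (use s in auto)
    have k2: "norm (Kf c2 pi s) \<le> Kb R" by (rule Kf_b[OF c2R]) (use s in auto)
    have t: "norm (TN N1 c1 s - TN N2 c2 s) \<le> Kb R * (sqrt pi * L2_norm_0pi (\<lambda>t. N1 t - N2 t)) + LK R * norm (c1 - c2) * (sqrt pi * W)"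
    proof -
      have "norm (TN N1 c1 s - TN N2 c2 s) \<le> Kb R * (LINT t:{0..pi}|lborel. norm (N1 t - N2 t)) + LK R * norm (c1 - c2) * (LINT t:{0..pi}|lborel. norm (N2 t))"
        by (rule TN_diff[OF N1 N2 s c1R c2R])
      also have "\<dots> \<le> Kb R * (sqrt pi * L2_norm_0pi (\<lambda>t. N1 t - N2 t)) + LK R * norm (c1 - c2) * (sqrt pi * W)"
        using KbR LKR by (intro add_mono mult_left_mono L1D L12) auto
      finally show ?thesis .
    qed
    have kw: "norm (\<omega>1 * Kf c1 pi s - \<omega>2 * Kf c2 pi s) \<le> W * (LK R * norm (c1 - c2)) + norm (\<omega>1 - \<omega>2) * Kb R"
    proof -
      have "\<omega>1 * Kf c1 pi s - \<omega>2 * Kf c2 pi s = \<omega>1 * (Kf c1 pi s - Kf c2 pi s) + (\<omega>1 - \<omega>2) * Kf c2 pi s"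
        by (simp add: algebra_simps)
      then have "norm (\<omega>1 * Kf c1 pi s - \<omega>2 * Kf c2 pi s) \<le> norm \<omega>1 * norm (Kf c1 pi s - Kf c2 pi s) + norm (\<omega>1 - \<omega>2) * norm (Kf c2 pi s)"
        by (metis norm_mult norm_triangle_ineq)
      also have "\<dots> \<le> W * (LK R * norm (c1 - c2)) + norm (\<omega>1 - \<omega>2) * Kb R"
        using w1 k k2 W0 by (intro add_mono mult_mono mult_left_mono) auto
      finally show ?thesis .
    qed
    have e: "Mf N1 \<omega>1 s - Mf N2 \<omega>2 s = - (Gf c1 pi s - Gf c2 pi s) / of_real pi + (\<omega>1 * Kf c1 pi s - \<omega>2 * Kf c2 pi s) + (N1 s - N2 s) + (TN N1 c1 s - TN N2 c2 s)"
      unfolding Mf_def c1_def[symmetric] c2_def[symmetric] by (simp add: algebra_simps diff_divide_distrib)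
    have "norm (Mf N1 \<omega>1 s - Mf N2 \<omega>2 s) \<le> norm (Gf c1 pi s - Gf c2 pi s) / pi + norm (\<omega>1 * Kf c1 pi s - \<omega>2 * Kf c2 pi s) + norm (N1 s - N2 s) + norm (TN N1 c1 s - TN N2 c2 s)"
      unfolding e
      by (rule order_trans[OF norm_triangle_ineq] add_mono order_trans[OF norm_triangle_ineq])+
         (simp_all add: norm_divide norm_minus_commute)
    also have "\<dots> \<le> LK R * norm (c1 - c2) / pi + (W * (LK R * norm (c1 - c2)) + norm (\<omega>1 - \<omega>2) * Kb R) + norm (N1 s - N2 s)
        + (Kb R * (sqrt pi * L2_norm_0pi (\<lambda>t. N1 t - N2 t)) + LK R * norm (c1 - c2) * (sqrt pi * W))"
      using g kw t by (intro add_mono divide_right_mono) auto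
    also have "\<dots> = norm (N1 s - N2 s) + P"
      unfolding P_def A_def B_def dc by (simp add: algebra_simps)
    finally show ?thesis .
  qed
  show ?thesis using L2_bound(2)[OF ND mD P0 b] unfolding P_def .
qed

theorem lemma10p2:
  fixes W :: real
  assumes "W > 0"
  shows "\<exists>C::real. \<forall>(N1::real \<Rightarrow> complex) (N2::real \<Rightarrow> complex) (\<omega>1::complex) (\<omega>2::complex).
     L2_0pi N1 \<and> L2_0pi N2 \<and>
     L2_norm_0pi N1 + cmod \<omega>1 \<le> W \<and> L2_norm_0pi N2 + cmod \<omega>2 \<le> W \<longrightarrow>
     (\<exists>(M1::real \<Rightarrow> complex) (M2::real \<Rightarrow> complex).
        L2_0pi M1 \<and> L2_0pi M2 \<and>
        (\<forall>\<rho>::complex. Delta N1 \<omega>1 (csqrt (\<rho>\<^sup>2 + 2 / pi * \<omega>1))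
            = - \<rho> * sin (\<rho> * pi) + (LINT t:{0..pi}|lborel. M1 t * cos (\<rho> * of_real t))) \<and>
        (\<forall>\<rho>::complex. Delta N2 \<omega>2 (csqrt (\<rho>\<^sup>2 + 2 / pi * \<omega>2))
            = - \<rho> * sin (\<rho> * pi) + (LINT t:{0..pi}|lborel. M2 t * cos (\<rho> * of_real t))) \<and>
        L2_norm_0pi M1 \<le> C \<and> L2_norm_0pi M2 \<le> C \<and>
        L2_norm_0pi (\<lambda>t. M1 t - M2 t)
          \<le> C * (L2_norm_0pi (\<lambda>t. N1 t - N2 t) + cmod (\<omega>1 - \<omega>2)))"
proof -
  define R where "R = 2 / pi * W"
  define A where "A = LK R * (2 / pi) / pi + W * LK R * (2 / pi) + Kb R + LK R * (2 / pi) * (sqrt pi * W)"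
  define B where "B = Kb R * sqrt pi"
  define C1 where "C1 = sqrt 2 * (W + sqrt pi * (Kb R / pi + W * Kb R + Kb R * (sqrt pi * W)))"
  define C2 where "C2 = sqrt 2 * (1 + sqrt pi * B + sqrt pi * A)"
  have R0: "0 \<le> R" using assms by (simp add: R_def)
  have A0: "0 \<le> A" unfolding A_def using Kb_nonneg[OF R0] LK_nonneg[of R] assms
    by (intro add_nonneg_nonneg mult_nonneg_nonneg) auto
  have B0: "0 \<le> B" unfolding B_def using Kb_nonneg[OF R0] by simp
  show ?thesis
  proof (intro exI[of _ "max C1 C2"] allI impI)
    fix N1 N2 :: "real \<Rightarrow> complex" and \<omega>1 \<omega>2 :: complex
    assume H: "L2_0pi N1 \<and> L2_0pi N2 \<and> L2_norm_0pi N1 + cmod \<omega>1 \<le> W \<and> L2_norm_0pi N2 + cmod \<omega>2 \<le> W"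
    then have N1: "L2_0pi N1" and N2: "L2_0pi N2" by auto
    have n1: "L2_norm_0pi N1 \<le> W" "cmod \<omega>1 \<le> W" using H L2_norm_nonneg[of N1] norm_ge_zero[of \<omega>1] by linarith+
    have n2: "L2_norm_0pi N2 \<le> W" "cmod \<omega>2 \<le> W" using H L2_norm_nonneg[of N2] norm_ge_zero[of \<omega>2] by linarith+
    have M1: "L2_0pi (Mf N1 \<omega>1)" "L2_norm_0pi (Mf N1 \<omega>1) \<le> C1"
      using M_single[OF N1 n1] unfolding C1_def R_def by auto
    have M2: "L2_0pi (Mf N2 \<omega>2)" "L2_norm_0pi (Mf N2 \<omega>2) \<le> C2 \<or> L2_norm_0pi (Mf N2 \<omega>2) \<le> C1"
      using M_single[OF N2 n2] unfolding C1_def R_def by auto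
    have D: "L2_norm_0pi (\<lambda>s. Mf N1 \<omega>1 s - Mf N2 \<omega>2 s)
       \<le> sqrt 2 * (L2_norm_0pi (\<lambda>t. N1 t - N2 t) + sqrt pi * (A * norm (\<omega>1 - \<omega>2) + B * L2_norm_0pi (\<lambda>t. N1 t - N2 t)))"
      using M_diff[OF N1 N2 n2(1) n1(2) n2(2)] unfolding A_def B_def R_def by simp
    define x where "x = L2_norm_0pi (\<lambda>t. N1 t - N2 t)"
    define y where "y = cmod (\<omega>1 - \<omega>2)"
    have x0: "0 \<le> x" "0 \<le> y" by (auto simp: x_def y_def L2_norm_nonneg)
    have "sqrt 2 * (x + sqrt pi * (A * y + B * x)) \<le> C2 * (x + y)"
    proof -
      have "sqrt 2 * (x + sqrt pi * (A * y + B * x)) = sqrt 2 * ((1 + sqrt pi * B) * x + (sqrt pi * A) * y)"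
        by (simp add: algebra_simps)
      also have "\<dots> \<le> sqrt 2 * ((1 + sqrt pi * B + sqrt pi * A) * x + (1 + sqrt pi * B + sqrt pi * A) * y)"
      proof -
        have k1: "1 + sqrt pi * B \<le> 1 + sqrt pi * B + sqrt pi * A" using A0 by simp
        have k2: "sqrt pi * A \<le> 1 + sqrt pi * B + sqrt pi * A" using B0 by simp
        have "(1 + sqrt pi * B) * x + (sqrt pi * A) * y \<le> (1 + sqrt pi * B + sqrt pi * A) * x + (1 + sqrt pi * B + sqrt pi * A) * y"
          by (rule add_mono[OF mult_right_mono[OF k1 x0(1)] mult_right_mono[OF k2 x0(2)]])
        then show ?thesis by (rule mult_left_mono) simp
      qed
      also have "\<dots> = C2 * (x + y)" by (simp add: C2_def algebra_simps)
      finally show ?thesis .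
    qed
    also have "\<dots> \<le> max C1 C2 * (x + y)" using x0 by (intro mult_right_mono) auto
    finally have DD: "L2_norm_0pi (\<lambda>s. Mf N1 \<omega>1 s - Mf N2 \<omega>2 s) \<le> max C1 C2 * (x + y)"
      using D unfolding x_def y_def by linarith
    have M2b: "L2_norm_0pi (Mf N2 \<omega>2) \<le> C1"
      using M_single(2)[OF N2 n2] unfolding C1_def R_def by auto
    show "\<exists>M1 M2. L2_0pi M1 \<and> L2_0pi M2 \<and>
        (\<forall>\<rho>::complex. Delta N1 \<omega>1 (csqrt (\<rho>\<^sup>2 + 2 / pi * \<omega>1))
            = - \<rho> * sin (\<rho> * pi) + (LINT t:{0..pi}|lborel. M1 t * cos (\<rho> * of_real t))) \<and>
        (\<forall>\<rho>::complex. Delta N2 \<omega>2 (csqrt (\<rho>\<^sup>2 + 2 / pi * \<omega>2))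
            = - \<rho> * sin (\<rho> * pi) + (LINT t:{0..pi}|lborel. M2 t * cos (\<rho> * of_real t))) \<and>
        L2_norm_0pi M1 \<le> max C1 C2 \<and> L2_norm_0pi M2 \<le> max C1 C2 \<and>
        L2_norm_0pi (\<lambda>t. M1 t - M2 t)
          \<le> max C1 C2 * (L2_norm_0pi (\<lambda>t. N1 t - N2 t) + cmod (\<omega>1 - \<omega>2))"
    proof (intro exI conjI allI)
      show "L2_0pi (Mf N1 \<omega>1)" by (rule M1(1))
      show "L2_0pi (Mf N2 \<omega>2)" by (rule M2(1))
      fix \<rho> :: complex
      show "Delta N1 \<omega>1 (csqrt (\<rho>\<^sup>2 + 2 / pi * \<omega>1)) = - \<rho> * sin (\<rho> * pi) + (LINT t:{0..pi}|lborel. Mf N1 \<omega>1 t * cos (\<rho> * of_real t))"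
        by (rule identity[OF N1])
    next
      fix \<rho> :: complex
      show "Delta N2 \<omega>2 (csqrt (\<rho>\<^sup>2 + 2 / pi * \<omega>2)) = - \<rho> * sin (\<rho> * pi) + (LINT t:{0..pi}|lborel. Mf N2 \<omega>2 t * cos (\<rho> * of_real t))"
        by (rule identity[OF N2])
    next
      show "L2_norm_0pi (Mf N1 \<omega>1) \<le> max C1 C2" using M1(2) by simp
      show "L2_norm_0pi (Mf N2 \<omega>2) \<le> max C1 C2" using M2b by simp
      show "L2_norm_0pi (\<lambda>t. Mf N1 \<omega>1 t - Mf N2 \<omega>2 t) \<le> max C1 C2 * (L2_norm_0pi (\<lambda>t. N1 t - N2 t) + cmod (\<omega>1 - \<omega>2))"
        using DD unfolding x_def y_def .
    qed
  qed
qed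


end
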